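(* Let $\mu_0=\mathcal N(m_0,\Sigma_0)$ and $\mu_1=\mathcal N(m_1,\Sigma_1)$ on $\mathbb R^d$, where $\Sigma_0,\Sigma_1$ are commuting positive definite matrices. Let $\alpha,\beta\in C^2([0,1])$ with $\alpha_0=\beta_1=1$, $\alpha_1=\beta_0=0$, $\alpha_t,\beta_t>0$ on $(0,1)$. Let $X_0\sim\mu_0$, $X_1\sim\mu_1$ be independent, $X_t=\alpha_tX_0+\beta_tX_1$, $v_t(x)=\mathbb E[\dot\alpha_tX_0+\dot\beta_tX_1\mid X_t=x]$, and let $f^v_t$ be the flow map of $v$ ($\partial_tf_t(x)=v_t(f_t(x))$, $f_0(x)=x$). Set $m_t=\alpha_tm_0+\beta_tm_1$ and $\Sigma_t=\alpha_t^2\Sigma_0+\beta_t^2\Sigma_1$. Then $$v_t(x)=\dot m_t+\tfrac12\dot\Sigma_t\Sigma_t^{-1}(x-m_t),\qquad f^v_t(x)=m_t+\Sigma_t^{1/2}\Sigma_0^{-1/2}(x-m_0).$$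
   Context: $\dot m_t,\dot\Sigma_t$ denote time derivatives; $\Sigma^{1/2}$ is the positive definite square root. *)

theory Defs
  imports "HOL-Probability.Probability"
begin

definition pos_def_mat :: "real^'n^'n \<Rightarrow> bool" where
  "pos_def_mat S \<longleftrightarrow> transpose S = S \<and> (\<forall>x::real^'n. x \<noteq> 0 \<longrightarrow> 0 < x \<bullet> (S *v x))"

definition mat_sqrt :: "real^'n^'n \<Rightarrow> real^'n^'n" where
  "mat_sqrt S = (THE R. pos_def_mat R \<and> R ** R = S)"

definition gaussian :: "real^'n \<Rightarrow> real^'n^'n \<Rightarrow> (real^'n) measure" where
  "gaussian m S = density lborel (\<lambda>x. ennreal
     (exp (- (1/2) * ((x - m) \<bullet> (matrix_inv S *v (x - m))))
      / sqrt ((2 * pi) ^ CARD('n) * det S)))"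

text \<open>g(X) is a version of the conditional expectation E[Y | X], i.e.
  E[Y | X = x] = g x for (law of X)-almost every x.\<close>
definition is_cond_exp_given ::
  "'w measure \<Rightarrow> ('w \<Rightarrow> 'b::euclidean_space) \<Rightarrow> ('w \<Rightarrow> 'c::euclidean_space) \<Rightarrow> ('b \<Rightarrow> 'c) \<Rightarrow> bool" where
  "is_cond_exp_given M X Y g \<longleftrightarrow>
     g \<in> borel_measurable borel \<and> integrable M Y \<and> integrable M (\<lambda>\<omega>. g (X \<omega>)) \<and>
     (\<forall>A \<in> sets borel. (\<integral>\<omega>. indicator A (X \<omega>) *\<^sub>R Y \<omega> \<partial>M)
                     = (\<integral>\<omega>. indicator A (X \<omega>) *\<^sub>R g (X \<omega>) \<partial>M))"

end

theory Submission
  imports Defs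
begin

lemma sym_inner:
  fixes A :: "real^'n^'n"
  assumes "transpose A = A"
  shows "x \<bullet> (A *v y) = (A *v x) \<bullet> y"
  by (metis assms dot_lmul_matrix transpose_matrix_vector)

lemma small_nonneg_zero:
  fixes w d :: real
  assumes "\<And>s. 2 * s * w + s^2 * d \<le> 0" and "w \<ge> 0"
  shows "w = 0"
proof (rule ccontr)
  assume "w \<noteq> 0" hence wp: "w > 0" using assms(2) by simp
  define s where "s = w / (\<bar>d\<bar> + 1)"
  have sp: "s > 0" unfolding s_def using wp by (simp add: add_pos_nonneg)
  have "2 * s * w + s^2 * d \<le> 0" by (rule assms(1))
  hence "s * (2 * w + s * d) \<le> 0" by (simp add: power2_eq_square algebra_simps)
  hence "2 * w + s * d \<le> 0" using sp by (simp add: mult_le_0_iff)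
  moreover have "s * \<bar>d\<bar> \<le> w"
  proof -
    have "s * (\<bar>d\<bar> + 1) = w" unfolding s_def by simp
    moreover have "s * \<bar>d\<bar> \<le> s * (\<bar>d\<bar> + 1)" using sp by simp
    ultimately show ?thesis by simp
  qed
  moreover have "- (s * \<bar>d\<bar>) \<le> s * d"
  proof -
    have "- \<bar>d\<bar> \<le> d" by arith
    hence "s * (- \<bar>d\<bar>) \<le> s * d" using sp by (intro mult_left_mono) auto
    thus ?thesis by simp
  qed
  ultimately show False using wp by linarith
qed

lemma eig_exists:
  fixes A :: "real^'n^'n"
  assumes sym: "transpose A = A" and sub: "subspace V"
    and inv: "\<And>x. x \<in> V \<Longrightarrow> A *v x \<in> V" and nz: "x0 \<in> V" "x0 \<noteq> 0"
  shows "\<exists>u\<in>V. norm u = 1 \<and> A *v u = (u \<bullet> (A *v u)) *\<^sub>R u"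
proof -
  define K where "K = V \<inter> sphere 0 1"
  have "compact K" unfolding K_def
    by (simp add: closed_subspace closed_Int_compact sub)
  moreover have "K \<noteq> {}"
  proof -
    have "(1 / norm x0) *\<^sub>R x0 \<in> K" unfolding K_def using nz sub
      by (simp add: subspace_scale)
    thus ?thesis by auto
  qed
  moreover have "continuous_on K (\<lambda>x. x \<bullet> (A *v x))"
    by (rule continuous_on_inner[OF continuous_on_id matrix_vector_mult_linear_continuous_on])
  ultimately have "\<exists>u\<in>K. \<forall>y\<in>K. y \<bullet> (A *v y) \<le> u \<bullet> (A *v u)"
    by (rule continuous_attains_sup)
  then obtain u where uK: "u \<in> K" and umax: "\<And>y. y \<in> K \<Longrightarrow> y \<bullet> (A *v y) \<le> u \<bullet> (A *v u)"
    by blast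
  define l where "l = u \<bullet> (A *v u)"
  have uV: "u \<in> V" and un: "norm u = 1" using uK K_def by auto
  have bound: "x \<bullet> (A *v x) \<le> l * (x \<bullet> x)" if "x \<in> V" for x
  proof (cases "x = 0")
    case True thus ?thesis by simp
  next
    case False
    have "(1 / norm x) *\<^sub>R x \<in> K" unfolding K_def using False that sub
      by (simp add: subspace_scale)
    hence "((1 / norm x) *\<^sub>R x) \<bullet> (A *v ((1 / norm x) *\<^sub>R x)) \<le> l" using umax l_def by blast
    hence "(1 / norm x)^2 * (x \<bullet> (A *v x)) \<le> l"
      by (simp add: matrix_vector_mult_scaleR power2_eq_square algebra_simps)
    moreover have "(norm x)^2 = x \<bullet> x" by (simp add: power2_norm_eq_inner)
    ultimately show ?thesis using False
      by (simp add: field_simps power2_eq_square)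
  qed
  define w where "w = A *v u - l *\<^sub>R u"
  have wV: "w \<in> V" unfolding w_def using inv uV sub
    by (simp add: subspace_diff subspace_scale)
  have uu: "u \<bullet> u = 1" using un by (simp add: norm_eq_1)
  have key: "2 * s * (w \<bullet> w) + s^2 * (w \<bullet> (A *v w) - l * (w \<bullet> w)) \<le> 0" for s
  proof -
    have "u + s *\<^sub>R w \<in> V" using uV wV sub by (simp add: subspace_add subspace_scale)
    hence b: "(u + s *\<^sub>R w) \<bullet> (A *v (u + s *\<^sub>R w)) \<le> l * ((u + s *\<^sub>R w) \<bullet> (u + s *\<^sub>R w))"
      by (rule bound)
    have e1: "(u + s *\<^sub>R w) \<bullet> (A *v (u + s *\<^sub>R w)) = l + 2 * s * (w \<bullet> (A *v u)) + s^2 * (w \<bullet> (A *v w))"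
      using sym_inner[OF sym, of u w]
      by (simp add: matrix_vector_right_distrib matrix_vector_mult_scaleR inner_add_left inner_add_right l_def
          power2_eq_square algebra_simps inner_commute)
    have e2: "(u + s *\<^sub>R w) \<bullet> (u + s *\<^sub>R w) = 1 + 2 * s * (w \<bullet> u) + s^2 * (w \<bullet> w)"
      using uu by (simp add: inner_add_left inner_add_right power2_eq_square algebra_simps inner_commute)
    have e3: "w \<bullet> (A *v u) = w \<bullet> w + l * (w \<bullet> u)"
      by (simp add: w_def inner_diff_right inner_diff_left algebra_simps)
    have uw: "u \<bullet> w = w \<bullet> u" by (rule inner_commute)
    have h: "l + 2 * s * (w \<bullet> w + l * (w \<bullet> u)) + s^2 * (w \<bullet> (A *v w)) \<le> l * (1 + 2 * s * (w \<bullet> u) + s^2 * (w \<bullet> w))"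
      using b e1 e2 e3 by simp
    have "l + 2 * s * (w \<bullet> w + l * (w \<bullet> u)) + s^2 * (w \<bullet> (A *v w)) - l * (1 + 2 * s * (w \<bullet> u) + s^2 * (w \<bullet> w))
       = 2 * s * (w \<bullet> w) + s^2 * (w \<bullet> (A *v w) - l * (w \<bullet> w))" by (simp add: algebra_simps)
    thus ?thesis using h by linarith
  qed
  have "w \<bullet> w = 0" by (rule small_nonneg_zero[OF key]) simp
  hence "w = 0" by simp
  thus ?thesis using uV un unfolding w_def l_def by (intro bexI[of _ u]) auto
qed

lemma common_eig:
  fixes A B :: "real^'n^'n"
  assumes symA: "transpose A = A" and symB: "transpose B = B" and comm: "A ** B = B ** A"
    and sub: "subspace V"
    and invA: "\<And>x. x \<in> V \<Longrightarrow> A *v x \<in> V" and invB: "\<And>x. x \<in> V \<Longrightarrow> B *v x \<in> V"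
    and nz: "x0 \<in> V" "x0 \<noteq> 0"
  shows "\<exists>u\<in>V. norm u = 1 \<and> A *v u = (u \<bullet> (A *v u)) *\<^sub>R u \<and> B *v u = (u \<bullet> (B *v u)) *\<^sub>R u"
proof -
  obtain u1 where u1: "u1 \<in> V" "norm u1 = 1" "A *v u1 = (u1 \<bullet> (A *v u1)) *\<^sub>R u1"
    using eig_exists[OF symA sub invA nz] by blast
  define l where "l = u1 \<bullet> (A *v u1)"
  define E where "E = {x \<in> V. A *v x = l *\<^sub>R x}"
  have subE: "subspace E"
    unfolding E_def subspace_def using sub
    by (auto simp: subspace_0 subspace_add subspace_scale matrix_vector_right_distrib matrix_vector_mult_scaleR
        scaleR_add_right)
  have invE: "B *v x \<in> E" if "x \<in> E" for x
  proof -
    have "A *v (B *v x) = B *v (A *v x)" by (simp add: matrix_vector_mul_assoc comm)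
    also have "\<dots> = l *\<^sub>R (B *v x)" using that by (simp add: E_def matrix_vector_mult_scaleR)
    finally show ?thesis using that invB E_def by auto
  qed
  have "u1 \<in> E" "u1 \<noteq> 0" using u1 l_def E_def by auto
  then obtain u where u: "u \<in> E" "norm u = 1" "B *v u = (u \<bullet> (B *v u)) *\<^sub>R u"
    using eig_exists[OF symB subE invE] by blast
  have Au: "A *v u = l *\<^sub>R u" using u E_def by auto
  have "u \<bullet> (A *v u) = l" using u(2) by (simp add: Au norm_eq_1)
  thus ?thesis using u Au E_def by auto
qed

definition onb :: "(real^'n) set \<Rightarrow> bool" where
  "onb U \<longleftrightarrow> finite U \<and> (\<forall>u\<in>U. u \<bullet> u = 1) \<and> (\<forall>u\<in>U. \<forall>w\<in>U. u \<noteq> w \<longrightarrow> u \<bullet> w = 0)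
     \<and> (\<forall>z. z = (\<Sum>u\<in>U. (u \<bullet> z) *\<^sub>R u))"

lemma common_basis:
  fixes A B :: "real^'n^'n"
  assumes symA: "transpose A = A" and symB: "transpose B = B" and comm: "A ** B = B ** A"
  shows "\<exists>U. onb U \<and> (\<forall>u\<in>U. A *v u = (u \<bullet> (A *v u)) *\<^sub>R u \<and> B *v u = (u \<bullet> (B *v u)) *\<^sub>R u)"
proof -
  define P where "P U \<longleftrightarrow> finite U \<and> (\<forall>u\<in>U. norm u = 1 \<and> A *v u = (u \<bullet> (A *v u)) *\<^sub>R u \<and> B *v u = (u \<bullet> (B *v u)) *\<^sub>R u)
     \<and> (\<forall>u\<in>U. \<forall>w\<in>U. u \<noteq> w \<longrightarrow> u \<bullet> w = 0)" for U :: "(real^'n) set"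
  have indep: "independent U" if "P U" for U
  proof (rule pairwise_orthogonal_independent)
    show "pairwise orthogonal U" using that unfolding P_def pairwise_def orthogonal_def by blast
    show "0 \<notin> U" using that unfolding P_def by force
  qed
  have step: "\<exists>U. P U \<and> card U = k" if "k \<le> DIM(real^'n)" for k
    using that
  proof (induction k)
    case 0 show ?case by (rule exI[of _ "{}"]) (simp add: P_def)
  next
    case (Suc k)
    then obtain U where U: "P U" "card U = k" by auto
    have "span U \<noteq> UNIV"
    proof
      assume "span U = UNIV"
      hence "dim (UNIV :: (real^'n) set) \<le> card U"
        by (metis U(1) P_def dim_le_card' dim_span)
      thus False using Suc.prems U(2) by simp
    qed
    then obtain a where a: "a \<noteq> 0" "\<forall>x\<in>span U. a \<bullet> x = 0" using span_not_UNIV_orthogonal by blast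
    define V where "V = {x. \<forall>u\<in>U. u \<bullet> x = 0}"
    have subV: "subspace V" unfolding V_def subspace_def by (auto simp: inner_add_right)
    have aV: "a \<in> V" using a unfolding V_def by (auto simp: span_base inner_commute)
    have invA: "A *v x \<in> V" if "x \<in> V" for x
    proof -
      { fix u assume "u \<in> U"
        have "u \<bullet> (A *v x) = (A *v u) \<bullet> x" by (rule sym_inner[OF symA])
        also have "\<dots> = 0"
        proof -
          have e: "A *v u = (u \<bullet> (A *v u)) *\<^sub>R u" using \<open>u \<in> U\<close> U(1) unfolding P_def by blast
          have "u \<bullet> x = 0" using \<open>u \<in> U\<close> that unfolding V_def by blast
          thus ?thesis by (subst e) simp
        qed
        finally have "u \<bullet> (A *v x) = 0" . }
      thus ?thesis unfolding V_def by auto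
    qed
    have invB: "B *v x \<in> V" if "x \<in> V" for x
    proof -
      { fix u assume "u \<in> U"
        have "u \<bullet> (B *v x) = (B *v u) \<bullet> x" by (rule sym_inner[OF symB])
        also have "\<dots> = 0"
        proof -
          have e: "B *v u = (u \<bullet> (B *v u)) *\<^sub>R u" using \<open>u \<in> U\<close> U(1) unfolding P_def by blast
          have "u \<bullet> x = 0" using \<open>u \<in> U\<close> that unfolding V_def by blast
          thus ?thesis by (subst e) simp
        qed
        finally have "u \<bullet> (B *v x) = 0" . }
      thus ?thesis unfolding V_def by auto
    qed
    obtain u where u: "u \<in> V" "norm u = 1" "A *v u = (u \<bullet> (A *v u)) *\<^sub>R u" "B *v u = (u \<bullet> (B *v u)) *\<^sub>R u"
      using common_eig[OF symA symB comm subV invA invB aV a(1)] by blast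
    have uU: "u \<notin> U"
    proof
      assume "u \<in> U"
      hence "u \<bullet> u = 0" using u(1) V_def by auto
      thus False using u(2) by simp
    qed
    have "P (insert u U)"
      using U(1) u uU unfolding P_def V_def by (auto simp: inner_commute)
    moreover have "card (insert u U) = Suc k" using U uU P_def by simp
    ultimately show ?case by blast
  qed
  then obtain U where U: "P U" "card U = DIM(real^'n)" by blast
  have spanU: "span U = UNIV"
  proof (rule ccontr)
    assume "span U \<noteq> UNIV"
    then obtain a where a: "a \<noteq> 0" "\<forall>x\<in>span U. a \<bullet> x = 0" using span_not_UNIV_orthogonal by blast
    have "P (insert ((1 / norm a) *\<^sub>R a) U) \<or> True" by simp
    have "independent (insert a U)"
    proof (rule pairwise_orthogonal_independent)
      show "pairwise orthogonal (insert a U)"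
        using U(1) a unfolding pairwise_def orthogonal_def P_def
        by (auto simp: span_base inner_commute)
      show "0 \<notin> insert a U" using a U(1) unfolding P_def by force
    qed
    moreover have "a \<notin> U" using a by (metis inner_eq_zero_iff span_base)
    ultimately have "card (insert a U) \<le> DIM(real^'n)" using independent_bound by blast
    thus False using U `a \<notin> U` P_def by simp
  qed
  have onb: "onb U"
    unfolding onb_def
  proof (intro conjI allI ballI impI)
    show "finite U" using U P_def by simp
    show "u \<bullet> u = 1" if "u \<in> U" for u using that U(1) P_def by (simp add: norm_eq_1)
    show "u \<bullet> w = 0" if "u \<in> U" "w \<in> U" "u \<noteq> w" for u w using that U(1) P_def by simp
    fix z :: "real^'n"
    define w where "w = z - (\<Sum>u\<in>U. (u \<bullet> z) *\<^sub>R u)"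
    have "u \<bullet> w = 0" if "u \<in> U" for u
    proof -
      have fin: "finite U" using U P_def by simp
      have "u \<bullet> (\<Sum>v\<in>U. (v \<bullet> z) *\<^sub>R v) = (\<Sum>v\<in>U. (v \<bullet> z) * (u \<bullet> v))"
        by (simp add: inner_sum_right)
      also have "\<dots> = (\<Sum>v\<in>{u}. (v \<bullet> z) * (u \<bullet> v))"
        using fin that U(1) unfolding P_def by (intro sum.mono_neutral_right) auto
      also have "\<dots> = u \<bullet> z" using that U(1) unfolding P_def by (simp add: norm_eq_1)
      finally show ?thesis unfolding w_def by (simp add: inner_diff_right)
    qed
    hence "orthogonal w y" if "y \<in> U" for y using that by (metis orthogonal_def inner_commute)
    hence "orthogonal w w" using spanU orthogonal_to_span by blast
    thus "z = (\<Sum>u\<in>U. (u \<bullet> z) *\<^sub>R u)" unfolding w_def orthogonal_def by simp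
  qed
  thus ?thesis using U(1) P_def by blast
qed

definition mk :: "(real^'n) set \<Rightarrow> (real^'n \<Rightarrow> real) \<Rightarrow> real^'n^'n" where
  "mk U k = (\<chi> i j. \<Sum>u\<in>U. k u * u$i * u$j)"

lemma mk_mv: "mk U k *v z = (\<Sum>u\<in>U. (k u * (u \<bullet> z)) *\<^sub>R u)"
proof (rule vec_eq_iff[THEN iffD2], rule allI)
  fix i
  have "(mk U k *v z) $ i = (\<Sum>j\<in>UNIV. (\<Sum>u\<in>U. k u * u$i * u$j) * z$j)"
    by (simp add: mk_def matrix_vector_mult_def)
  also have "\<dots> = (\<Sum>u\<in>U. \<Sum>j\<in>UNIV. k u * u$i * u$j * z$j)"
    by (simp add: sum_distrib_right sum.swap[of _ UNIV U])
  also have "\<dots> = (\<Sum>u\<in>U. k u * (u \<bullet> z) * u$i)"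
    by (simp add: inner_vec_def sum_distrib_left sum_distrib_right mult_ac)
  finally show "(mk U k *v z) $ i = (\<Sum>u\<in>U. (k u * (u \<bullet> z)) *\<^sub>R u) $ i"
    by (simp add: sum_component)
qed

lemma onb_inner_sum:
  assumes "onb U" "u \<in> U"
  shows "u \<bullet> (\<Sum>v\<in>U. g v *\<^sub>R v) = g u"
proof -
  have "u \<bullet> (\<Sum>v\<in>U. g v *\<^sub>R v) = (\<Sum>v\<in>U. g v * (u \<bullet> v))" by (simp add: inner_sum_right)
  also have "\<dots> = (\<Sum>v\<in>{u}. g v * (u \<bullet> v))"
    using assms unfolding onb_def by (intro sum.mono_neutral_right) auto
  also have "\<dots> = g u" using assms unfolding onb_def by simp
  finally show ?thesis .
qed

lemma mk_inner: "onb U \<Longrightarrow> u \<in> U \<Longrightarrow> u \<bullet> (mk U k *v z) = k u * (u \<bullet> z)"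
  by (simp add: mk_mv onb_inner_sum)

lemma onb_ext: "onb U \<Longrightarrow> (\<And>u. u \<in> U \<Longrightarrow> u \<bullet> x = u \<bullet> y) \<Longrightarrow> x = y"
  unfolding onb_def by (metis (no_types, lifting) sum.cong)

lemma onb_expand: "onb U \<Longrightarrow> z = (\<Sum>u\<in>U. (u \<bullet> z) *\<^sub>R u)"
  unfolding onb_def by blast

lemma mk_eigen:
  assumes "onb U" "\<And>u. u \<in> U \<Longrightarrow> A *v u = k u *\<^sub>R u"
  shows "A = mk U k"
proof -
  have "A *v z = mk U k *v z" for z
  proof -
    have "A *v z = A *v (\<Sum>u\<in>U. (u \<bullet> z) *\<^sub>R u)" using onb_expand[OF assms(1)] by metis
    also have "\<dots> = (\<Sum>u\<in>U. (u \<bullet> z) *\<^sub>R (A *v u))"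
      by (simp add: vec.sum matrix_scaleR_vector_ac scaleR_matrix_vector_assoc)
    also have "\<dots> = (\<Sum>u\<in>U. (k u * (u \<bullet> z)) *\<^sub>R u)" using assms(2) by (intro sum.cong) (auto simp: mult.commute)
    finally show ?thesis by (simp add: mk_mv)
  qed
  thus ?thesis by (simp add: matrix_eq)
qed

lemma mk_ev: "onb U \<Longrightarrow> u \<in> U \<Longrightarrow> mk U k *v u = k u *\<^sub>R u"
  by (rule onb_ext[of U]) (auto simp: mk_inner onb_def)

lemma mk_mult: "onb U \<Longrightarrow> mk U k ** mk U l = mk U (\<lambda>u. k u * l u)"
  by (rule mk_eigen) (auto simp: matrix_vector_mul_assoc[symmetric] mk_ev matrix_vector_mult_scaleR)

lemma mk_add: "mk U k + mk U l = mk U (\<lambda>u. k u + l u)"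
  by (simp add: mk_def vec_eq_iff sum.distrib algebra_simps)

lemma mk_scale: "c *\<^sub>R mk U k = mk U (\<lambda>u. c * k u)"
  by (simp add: mk_def vec_eq_iff sum_distrib_left algebra_simps)

lemma mk_one: "onb U \<Longrightarrow> mat 1 = mk U (\<lambda>u. 1)"
  by (rule mk_eigen) auto

lemma mk_cong: "(\<And>u. u \<in> U \<Longrightarrow> k u = l u) \<Longrightarrow> mk U k = mk U l"
  unfolding mk_def by (simp add: vec_eq_iff)

lemma mk_transpose: "transpose (mk U k) = mk U k"
  by (simp add: mk_def transpose_def vec_eq_iff mult.commute mult.left_commute)

lemma mk_inv:
  assumes "onb U" "\<And>u. u \<in> U \<Longrightarrow> k u \<noteq> 0"
  shows "matrix_inv (mk U k) = mk U (\<lambda>u. 1 / k u)"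
proof -
  let ?A = "mk U k" and ?N = "mk U (\<lambda>u. 1 / k u)"
  have r: "?A ** ?N = mat 1" and l: "?N ** ?A = mat 1"
    using assms by (auto simp: mk_mult mk_one[OF assms(1)] intro!: mk_cong)
  have "?A ** matrix_inv ?A = mat 1 \<and> matrix_inv ?A ** ?A = mat 1"
    unfolding matrix_inv_def by (rule someI[of _ ?N]) (use r l in blast)
  hence "matrix_inv ?A = matrix_inv ?A ** (?A ** ?N)" using r by (simp add: matrix_mul_rid)
  also have "\<dots> = ?N" using \<open>?A ** matrix_inv ?A = mat 1 \<and> matrix_inv ?A ** ?A = mat 1\<close>
    by (simp add: matrix_mul_assoc matrix_mul_lid)
  finally show ?thesis .
qed

lemma mk_quad: "onb U \<Longrightarrow> z \<bullet> (mk U k *v z) = (\<Sum>u\<in>U. k u * (u \<bullet> z)^2)"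
  by (simp add: mk_mv inner_sum_right power2_eq_square inner_commute mult.assoc)

lemma onb_nonzero_coord:
  assumes "onb U" "z \<noteq> 0" shows "\<exists>u\<in>U. u \<bullet> z \<noteq> 0"
  using onb_expand[OF assms(1), of z] assms(2) by (metis (no_types, lifting) scale_eq_0_iff sum.neutral)

lemma mk_posdef:
  fixes U :: "(real^'n) set"
  assumes "onb U" "\<And>u. u \<in> U \<Longrightarrow> k u > 0"
  shows "pos_def_mat (mk U k)"
  unfolding pos_def_mat_def
proof (intro conjI allI impI)
  show "transpose (mk U k) = mk U k" by (rule mk_transpose)
  fix x :: "real^'n" assume "x \<noteq> 0"
  then obtain u where u: "u \<in> U" "u \<bullet> x \<noteq> 0" using onb_nonzero_coord[OF assms(1)] by blast
  have fin: "finite U" using assms(1) onb_def by blast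
  have "0 < k u * (u \<bullet> x)^2" using u assms(2) by simp
  also have "\<dots> \<le> (\<Sum>v\<in>U. k v * (v \<bullet> x)^2)"
    using fin u assms(2) by (intro member_le_sum) (auto simp: less_imp_le)
  finally show "0 < x \<bullet> (mk U k *v x)" by (simp add: mk_quad[OF assms(1)])
qed

lemma posdef_inj:
  assumes "pos_def_mat R" "c \<ge> 0" "(R + c *\<^sub>R mat 1) *v w = 0"
  shows "w = 0"
proof (rule ccontr)
  assume "w \<noteq> 0"
  hence "0 < w \<bullet> (R *v w)" using assms(1) unfolding pos_def_mat_def by blast
  moreover have "0 \<le> c * (w \<bullet> w)" using assms(2) by simp
  moreover have "w \<bullet> ((R + c *\<^sub>R mat 1) *v w) = w \<bullet> (R *v w) + c * (w \<bullet> w)"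
    by (simp add: matrix_vector_mult_add_rdistrib scaleR_matrix_vector_assoc[symmetric] inner_add_right)
  ultimately show False using assms(3) by simp
qed

lemma mk_sqrt:
  assumes U: "onb U" and kp: "\<And>u. u \<in> U \<Longrightarrow> k u > 0"
  shows "mat_sqrt (mk U k) = mk U (\<lambda>u. sqrt (k u))"
  unfolding mat_sqrt_def
proof (rule the_equality)
  show "pos_def_mat (mk U (\<lambda>u. sqrt (k u))) \<and> mk U (\<lambda>u. sqrt (k u)) ** mk U (\<lambda>u. sqrt (k u)) = mk U k"
    using kp by (auto simp: mk_posdef[OF U] mk_mult[OF U] abs_of_pos intro!: mk_cong)
  fix R assume R: "pos_def_mat R \<and> R ** R = mk U k"
  show "R = mk U (\<lambda>u. sqrt (k u))"
  proof (rule mk_eigen[OF U])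
    fix u assume u: "u \<in> U"
    define s where "s = sqrt (k u)"
    have s0: "s \<ge> 0" and ss: "s * s = k u" using kp[OF u] by (auto simp: s_def)
    have "(R + s *\<^sub>R mat 1) *v (R *v u - s *\<^sub>R u) = (R ** R) *v u - (s * s) *\<^sub>R u"
      by (simp add: matrix_vector_mult_add_rdistrib scaleR_matrix_vector_assoc[symmetric] matrix_vector_mul_assoc[symmetric]
          vec.diff matrix_scaleR_vector_ac[symmetric] algebra_simps)
    also have "\<dots> = 0" using R ss by (simp add: mk_ev[OF U u])
    finally have "R *v u - s *\<^sub>R u = 0" using posdef_inj[OF _ s0] R by blast
    thus "R *v u = sqrt (k u) *\<^sub>R u" by (simp add: s_def)
  qed
qed

lemma sqrt_div_lemma: "(c::real) > 0 \<Longrightarrow> d / (2 * sqrt c) = d / (2 * c) * sqrt c"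
proof -
  assume c: "c > 0"
  define r where "r = sqrt c"
  have r: "r > 0" "c = r * r" using c by (auto simp: r_def)
  show ?thesis unfolding r_def[symmetric] using r by (simp add: field_simps)
qed

lemma sqrt_comp_deriv:
  assumes "(g has_real_derivative g') (at t within S)" "g t > 0"
  shows "((\<lambda>s. sqrt (g s)) has_real_derivative (g' / (2 * sqrt (g t)))) (at t within S)"
proof -
  have "((\<lambda>s. sqrt (g s)) has_real_derivative (inverse (sqrt (g t)) / 2 * g')) (at t within S)"
    by (rule DERIV_chain2[OF DERIV_real_sqrt[OF assms(2)] assms(1)])
  thus ?thesis by (simp add: field_simps)
qed

lemma inner_vderiv:
  assumes "(g has_vector_derivative g') F"
  shows "((\<lambda>s. u \<bullet> g s) has_real_derivative (u \<bullet> g')) F"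
  unfolding has_real_derivative_iff_has_vector_derivative
  by (rule bounded_linear.has_vector_derivative[OF bounded_linear_inner_right assms])

lemma ode_part:
  fixes U :: "(real^'n) set" and c cd :: "real \<Rightarrow> real^'n \<Rightarrow> real"
    and m mdot :: "real \<Rightarrow> real^'n"
  assumes U: "onb U"
    and cpos: "\<And>t u. t \<in> {0..1} \<Longrightarrow> u \<in> U \<Longrightarrow> c t u > 0"
    and cder: "\<And>t u. t \<in> {0..1} \<Longrightarrow> u \<in> U \<Longrightarrow> ((\<lambda>s. c s u) has_real_derivative cd t u) (at t within {0..1})"
    and mder: "\<And>t. t \<in> {0..1} \<Longrightarrow> (m has_vector_derivative mdot t) (at t within {0..1})"
    and vdef: "\<And>t y. t \<in> {0..1} \<Longrightarrow> v t y = mdot t + mk U (\<lambda>u. cd t u / (2 * c t u)) *v (y - m t)"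
    and fdef: "\<And>t y. t \<in> {0..1} \<Longrightarrow> f t y = m t + mk U (\<lambda>u. sqrt (c t u) / sqrt (c 0 u)) *v (y - m 0)"
  shows "(\<forall>x. f 0 x = x \<and>
          (\<forall>t\<in>{0..1}. ((\<lambda>s. f s x) has_vector_derivative v t (f t x)) (at t within {0..1})))
     \<and> (\<forall>x g. g 0 = x \<and>
          (\<forall>t\<in>{0..1}. (g has_vector_derivative v t (g t)) (at t within {0..1}))
          \<longrightarrow> (\<forall>t\<in>{0..1}. g t = f t x))"
proof (intro conjI allI impI ballI)
  have z01: "(0::real) \<in> {0..1}" by simp
  fix x
  show "f 0 x = x"
  proof -
    have "mk U (\<lambda>u. sqrt (c 0 u) / sqrt (c 0 u)) = mk U (\<lambda>u. 1)"
      using cpos[OF z01] by (intro mk_cong) (metis div_self less_irrefl real_sqrt_gt_0_iff)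
    thus ?thesis using fdef[OF z01] by (simp add: mk_one[OF U, symmetric])
  qed
  fix t :: real assume t: "t \<in> {0..1}"
  define F where "F s = m s + (\<Sum>u\<in>U. (sqrt (c s u) / sqrt (c 0 u) * (u \<bullet> (x - m 0))) *\<^sub>R u)" for s
  define F' where "F' = mdot t + (\<Sum>u\<in>U. (cd t u / (2 * sqrt (c t u)) / sqrt (c 0 u) * (u \<bullet> (x - m 0))) *\<^sub>R u)"
  have FF: "f s x = F s" if "s \<in> {0..1}" for s
    using fdef[OF that] by (simp add: F_def mk_mv)
  have dF: "(F has_vector_derivative F') (at t within {0..1})"
    unfolding F_def F'_def
  proof (intro has_vector_derivative_add mder[OF t] has_vector_derivative_sum)
    fix u assume u: "u \<in> U"
    have d: "((\<lambda>s. sqrt (c s u) / sqrt (c 0 u) * (u \<bullet> (x - m 0))) has_real_derivative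
           (cd t u / (2 * sqrt (c t u)) / sqrt (c 0 u) * (u \<bullet> (x - m 0)))) (at t within {0..1})"
      by (intro DERIV_cmult_right DERIV_cdivide sqrt_comp_deriv cder[OF t u] cpos[OF t u])
    show "((\<lambda>s. (sqrt (c s u) / sqrt (c 0 u) * (u \<bullet> (x - m 0))) *\<^sub>R u) has_vector_derivative
           (cd t u / (2 * sqrt (c t u)) / sqrt (c 0 u) * (u \<bullet> (x - m 0))) *\<^sub>R u) (at t within {0..1})"
      using has_vector_derivative_scaleR[OF d has_vector_derivative_const[of u]] by simp
  qed
  have eqF: "F' = v t (f t x)"
  proof (rule onb_ext[OF U])
    fix u assume u: "u \<in> U"
    have c0: "c 0 u > 0" and ct: "c t u > 0" using cpos[OF z01 u] cpos[OF t u] by auto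
    have "u \<bullet> F' = u \<bullet> mdot t + cd t u / (2 * sqrt (c t u)) / sqrt (c 0 u) * (u \<bullet> (x - m 0))"
      unfolding F'_def by (simp add: inner_add_right onb_inner_sum[OF U u])
    moreover have "u \<bullet> v t (f t x) = u \<bullet> mdot t + cd t u / (2 * c t u) * (sqrt (c t u) / sqrt (c 0 u) * (u \<bullet> (x - m 0)))"
      using vdef[OF t] fdef[OF t] by (simp add: inner_add_right mk_inner[OF U u])
    moreover have "cd t u / (2 * sqrt (c t u)) = cd t u / (2 * c t u) * sqrt (c t u)"
      by (rule sqrt_div_lemma[OF ct])
    ultimately show "u \<bullet> F' = u \<bullet> v t (f t x)" by simp
  qed
  show "((\<lambda>s. f s x) has_vector_derivative v t (f t x)) (at t within {0..1})"
    by (rule has_vector_derivative_transform[OF t _ dF[unfolded eqF]]) (rule FF)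
next
  fix x and g :: "real \<Rightarrow> real^'n" and t :: real
  assume g: "g 0 = x \<and> (\<forall>t\<in>{0..1}. (g has_vector_derivative v t (g t)) (at t within {0..1}))"
  assume t: "t \<in> {0..1}"
  have z01: "(0::real) \<in> {0..1}" by simp
  show "g t = f t x"
  proof (rule onb_ext[OF U])
    fix u assume u: "u \<in> U"
    define phi where "phi s = (u \<bullet> (g s - m s)) / sqrt (c s u)" for s
    have "\<forall>s\<in>{0..1}. (phi has_real_derivative 0) (at s within {0..1})"
    proof
      fix s :: real assume s: "s \<in> {0..1}"
      have cs: "c s u > 0" using cpos[OF s u] .
      have d1: "((\<lambda>s. u \<bullet> (g s - m s)) has_real_derivative (u \<bullet> (v s (g s) - mdot s))) (at s within {0..1})"
        by (intro inner_vderiv has_vector_derivative_diff mder[OF s]) (use g s in blast)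
      have d2: "((\<lambda>s. sqrt (c s u)) has_real_derivative (cd s u / (2 * sqrt (c s u)))) (at s within {0..1})"
        by (intro sqrt_comp_deriv cder[OF s u] cs)
      have dphi: "(phi has_real_derivative
          ((u \<bullet> (v s (g s) - mdot s)) * sqrt (c s u) - (u \<bullet> (g s - m s)) * (cd s u / (2 * sqrt (c s u))))
            / (sqrt (c s u) * sqrt (c s u))) (at s within {0..1})"
        unfolding phi_def by (rule DERIV_divide[OF d1 d2]) (use cs in simp)
      have e1: "u \<bullet> (v s (g s) - mdot s) = cd s u / (2 * c s u) * (u \<bullet> (g s - m s))"
        using vdef[OF s] by (simp add: mk_inner[OF U u])
      have e2: "cd s u / (2 * c s u) * sqrt (c s u) = cd s u / (2 * sqrt (c s u))"
        by (rule sqrt_div_lemma[OF cs, symmetric])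
      define X where "X = u \<bullet> (g s - m s)"
      have "(u \<bullet> (v s (g s) - mdot s)) * sqrt (c s u) - (u \<bullet> (g s - m s)) * (cd s u / (2 * sqrt (c s u)))
          = X * (cd s u / (2 * c s u) * sqrt (c s u)) - X * (cd s u / (2 * sqrt (c s u)))"
        unfolding e1 X_def[symmetric] by (simp only: mult_ac)
      also have "\<dots> = 0" unfolding e2 by simp
      finally show "(phi has_real_derivative 0) (at s within {0..1})"
        using dphi by simp
    qed
    then obtain k where k: "\<And>s. s \<in> {0..1} \<Longrightarrow> phi s = k"
      using has_field_derivative_zero_constant[of "{0..1}" phi] by auto
    have "phi t = phi 0" using k t z01 by simp
    hence "u \<bullet> (g t - m t) = sqrt (c t u) / sqrt (c 0 u) * (u \<bullet> (x - m 0))"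
      using cpos[OF t u] cpos[OF z01 u] g unfolding phi_def by (simp add: field_simps)
    moreover have "u \<bullet> f t x = u \<bullet> m t + sqrt (c t u) / sqrt (c 0 u) * (u \<bullet> (x - m 0))"
      unfolding fdef[OF t, of x] by (simp only: inner_add_right mk_inner[OF U u])
    ultimately show "u \<bullet> g t = u \<bullet> f t x"
      by (simp add: inner_diff_right algebra_simps)
  qed
qed

lemma nn_affine:
  fixes h :: "'a::euclidean_space \<Rightarrow> ennreal" and c :: real
  assumes c: "c \<noteq> 0" and h[measurable]: "h \<in> borel_measurable borel"
  shows "(\<integral>\<^sup>+x. h (t + c *\<^sub>R x) \<partial>lborel) = ennreal (1 / \<bar>c\<bar> ^ DIM('a)) * (\<integral>\<^sup>+x. h x \<partial>lborel)"
proof -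
  define K where "K = \<bar>c\<bar> ^ DIM('a)"
  have Kp: "K > 0" using c by (simp add: K_def)
  have T[measurable]: "(\<lambda>x::'a. t + c *\<^sub>R x) \<in> borel_measurable borel" by measurable
  have e: "lborel = density (distr lborel borel (\<lambda>x::'a. t + c *\<^sub>R x)) (\<lambda>_. ennreal K)"
    unfolding K_def by (rule lborel_affine[OF c])
  have "(\<integral>\<^sup>+x. h x \<partial>lborel) = (\<integral>\<^sup>+x. h x \<partial>density (distr lborel borel (\<lambda>x::'a. t + c *\<^sub>R x)) (\<lambda>_. ennreal K))"
    by (rule arg_cong[where f="\<lambda>M. integral\<^sup>N M h", OF e])
  also have "\<dots> = (\<integral>\<^sup>+x. ennreal K * h x \<partial>distr lborel borel (\<lambda>x::'a. t + c *\<^sub>R x))"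
    by (subst nn_integral_density) auto
  also have "\<dots> = (\<integral>\<^sup>+x. ennreal K * h (t + c *\<^sub>R x) \<partial>lborel)"
    by (subst nn_integral_distr) auto
  also have "\<dots> = ennreal K * (\<integral>\<^sup>+x. h (t + c *\<^sub>R x) \<partial>lborel)"
    by (subst nn_integral_cmult) auto
  finally have "ennreal (1 / K) * (\<integral>\<^sup>+x. h x \<partial>lborel) = ennreal (1 / K) * ennreal K * (\<integral>\<^sup>+x. h (t + c *\<^sub>R x) \<partial>lborel)"
    by (simp add: mult.assoc)
  also have "ennreal (1 / K) * ennreal K = 1" using Kp by (simp add: ennreal_mult[symmetric])
  finally show ?thesis by (simp add: K_def)
qed

lemma slice1:
  fixes g :: "'a::euclidean_space \<times> 'b::euclidean_space \<Rightarrow> ennreal" and c :: real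
    and t :: "'b \<Rightarrow> 'a"
  assumes c: "c \<noteq> 0" and g[measurable]: "g \<in> borel_measurable (lborel \<Otimes>\<^sub>M lborel)"
    and t[measurable]: "t \<in> borel_measurable borel"
  shows "(\<integral>\<^sup>+z. g (t (snd z) + c *\<^sub>R fst z, snd z) \<partial>(lborel \<Otimes>\<^sub>M lborel))
       = ennreal (1 / \<bar>c\<bar> ^ DIM('a)) * (\<integral>\<^sup>+z. g z \<partial>(lborel \<Otimes>\<^sub>M lborel))"
proof -
  have m1[measurable]: "(\<lambda>z. g (t (snd z) + c *\<^sub>R fst z, snd z)) \<in> borel_measurable (lborel \<Otimes>\<^sub>M lborel)"
    by measurable
  have "(\<integral>\<^sup>+z. g (t (snd z) + c *\<^sub>R fst z, snd z) \<partial>(lborel \<Otimes>\<^sub>M lborel))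
      = (\<integral>\<^sup>+y. (\<integral>\<^sup>+x. g (t y + c *\<^sub>R x, y) \<partial>lborel) \<partial>lborel)"
    using lborel_pair.nn_integral_snd[OF m1] by simp
  also have "\<dots> = (\<integral>\<^sup>+y. ennreal (1 / \<bar>c\<bar> ^ DIM('a)) * (\<integral>\<^sup>+x. g (x, y) \<partial>lborel) \<partial>lborel)"
    by (intro nn_integral_cong nn_affine[OF c, where h="\<lambda>x. g (x, y)" for y]) measurable
  also have "\<dots> = ennreal (1 / \<bar>c\<bar> ^ DIM('a)) * (\<integral>\<^sup>+y. (\<integral>\<^sup>+x. g (x, y) \<partial>lborel) \<partial>lborel)"
    by (rule nn_integral_cmult) (measurable)
  also have "(\<integral>\<^sup>+y. (\<integral>\<^sup>+x. g (x, y) \<partial>lborel) \<partial>lborel) = (\<integral>\<^sup>+z. g z \<partial>(lborel \<Otimes>\<^sub>M lborel))"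
    using lborel_pair.nn_integral_snd[OF g] by simp
  finally show ?thesis .
qed

lemma slice2:
  fixes g :: "'a::euclidean_space \<times> 'b::euclidean_space \<Rightarrow> ennreal" and c :: real
    and t :: "'a \<Rightarrow> 'b"
  assumes c: "c \<noteq> 0" and g[measurable]: "g \<in> borel_measurable (lborel \<Otimes>\<^sub>M lborel)"
    and t[measurable]: "t \<in> borel_measurable borel"
  shows "(\<integral>\<^sup>+z. g (fst z, t (fst z) + c *\<^sub>R snd z) \<partial>(lborel \<Otimes>\<^sub>M lborel))
       = ennreal (1 / \<bar>c\<bar> ^ DIM('b)) * (\<integral>\<^sup>+z. g z \<partial>(lborel \<Otimes>\<^sub>M lborel))"
proof -
  have m1[measurable]: "(\<lambda>z. g (fst z, t (fst z) + c *\<^sub>R snd z)) \<in> borel_measurable (lborel \<Otimes>\<^sub>M lborel)"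
    by measurable
  have "(\<integral>\<^sup>+z. g (fst z, t (fst z) + c *\<^sub>R snd z) \<partial>(lborel \<Otimes>\<^sub>M lborel))
      = (\<integral>\<^sup>+x. (\<integral>\<^sup>+y. g (x, t x + c *\<^sub>R y) \<partial>lborel) \<partial>lborel)"
    using lborel.nn_integral_fst[OF m1] by simp
  also have "\<dots> = (\<integral>\<^sup>+x. ennreal (1 / \<bar>c\<bar> ^ DIM('b)) * (\<integral>\<^sup>+y. g (x, y) \<partial>lborel) \<partial>lborel)"
    by (intro nn_integral_cong nn_affine[OF c, where h="\<lambda>y. g (x, y)" for x]) measurable
  also have "\<dots> = ennreal (1 / \<bar>c\<bar> ^ DIM('b)) * (\<integral>\<^sup>+x. (\<integral>\<^sup>+y. g (x, y) \<partial>lborel) \<partial>lborel)"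
    by (rule nn_integral_cmult) (measurable)
  also have "(\<integral>\<^sup>+x. (\<integral>\<^sup>+y. g (x, y) \<partial>lborel) \<partial>lborel) = (\<integral>\<^sup>+z. g z \<partial>(lborel \<Otimes>\<^sub>M lborel))"
    using lborel.nn_integral_fst[OF g] by simp
  finally show ?thesis .
qed

lemma distr_density_preserve:
  fixes R :: "'a \<Rightarrow> 'a" and rho :: "'a \<Rightarrow> ennreal"
  assumes R[measurable]: "R \<in> L \<rightarrow>\<^sub>M L" and rho[measurable]: "rho \<in> borel_measurable L"
    and pres: "\<And>g. g \<in> borel_measurable L \<Longrightarrow> (\<integral>\<^sup>+z. g (R z) \<partial>L) = (\<integral>\<^sup>+z. g z \<partial>L)"
    and inv: "\<And>z. z \<in> space L \<Longrightarrow> rho (R z) = rho z"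
  shows "distr (density L rho) L R = density L rho"
proof (rule measure_eqI)
  show "sets (distr (density L rho) L R) = sets (density L rho)" by simp
  fix A assume A: "A \<in> sets (distr (density L rho) L R)"
  hence A'[measurable]: "A \<in> sets L" by simp
  have Rd: "R \<in> density L rho \<rightarrow>\<^sub>M L" by simp
  have "emeasure (distr (density L rho) L R) A = emeasure (density L rho) (R -` A \<inter> space L)"
    using emeasure_distr[OF Rd A'] by simp
  also have "\<dots> = (\<integral>\<^sup>+z. rho z * indicator (R -` A \<inter> space L) z \<partial>L)"
    by (rule emeasure_density) (measurable)
  also have "\<dots> = (\<integral>\<^sup>+z. rho (R z) * indicator A (R z) \<partial>L)"
    by (intro nn_integral_cong) (auto simp: inv indicator_def)
  also have "\<dots> = (\<integral>\<^sup>+z. rho z * indicator A z \<partial>L)"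
    by (rule pres[where g="\<lambda>z. rho z * indicator A z"]) measurable
  also have "\<dots> = emeasure (density L rho) A"
    by (rule emeasure_density[symmetric]) measurable
  finally show "emeasure (distr (density L rho) L R) A = emeasure (density L rho) A" .
qed

lemma integral_odd_zero:
  fixes H :: "'a \<Rightarrow> 'b::{banach, second_countable_topology}"
  assumes R[measurable]: "R \<in> D \<rightarrow>\<^sub>M L" and H[measurable]: "H \<in> borel_measurable L"
    and pres: "distr D L R = D" and odd: "\<And>z. z \<in> space D \<Longrightarrow> H (R z) = - H z"
  shows "integral\<^sup>L D H = 0"
proof -
  have "integral\<^sup>L D H = integral\<^sup>L (distr D L R) H" using pres by simp
  also have "\<dots> = integral\<^sup>L D (\<lambda>z. H (R z))" by (rule integral_distr) measurable
  also have "\<dots> = integral\<^sup>L D (\<lambda>z. - H z)" by (intro Bochner_Integration.integral_cong) (auto simp: odd)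
  also have "\<dots> = - integral\<^sup>L D H" by simp
  finally have e: "integral\<^sup>L D H = - integral\<^sup>L D H" .
  have "integral\<^sup>L D H + integral\<^sup>L D H = integral\<^sup>L D H + - integral\<^sup>L D H"
    by (subst (2) e) (rule refl)
  hence "(2::real) *\<^sub>R integral\<^sup>L D H = 0" by (simp add: scaleR_2)
  thus ?thesis by simp
qed

lemma sc_Q:
  fixes a b l m p q w C :: real
  assumes C: "C \<noteq> 0" and l: "l \<noteq> 0" and m: "m \<noteq> 0" and Cd: "C = a^2 * l + b^2 * m"
    and w: "w = b * m * p - a * l * q"
  shows "(p - 2 * b * w / C)^2 / l + (q + 2 * a * w / C)^2 / m = p^2 / l + q^2 / m"
proof -
  define s where "s = 2 * w / C"
  have sC: "s * C = 2 * w" using C by (simp add: s_def)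
  have e0: "p - 2 * b * w / C = p - b * s" "q + 2 * a * w / C = q + a * s" by (simp_all add: s_def)
  have e1: "(p - b * s)^2 / l + (q + a * s)^2 / m
      = p^2 / l + q^2 / m + s * (- 2 * b * p / l + 2 * a * q / m) + s^2 * (b^2 / l + a^2 / m)"
    using l m by (simp add: field_simps power2_eq_square)
  have e2: "- 2 * b * p / l + 2 * a * q / m = - 2 * w / (l * m)"
    using l m by (simp add: w field_simps)
  have e3: "b^2 / l + a^2 / m = C / (l * m)"
    using l m by (simp add: Cd field_simps)
  have "s * (- 2 * w / (l * m)) + s^2 * (C / (l * m)) = s * (s * C - 2 * w) / (l * m)"
    using l m by (simp add: field_simps power2_eq_square)
  also have "\<dots> = 0" using sC by simp
  finally show ?thesis unfolding e0 e1 e2 e3 by simp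
qed

lemma sc_w:
  fixes a b l m p q w C M0 M1 :: real
  assumes C: "C \<noteq> 0" and Cd: "C = a^2 * l + b^2 * m"
    and w: "w = b * m * (p - M0) - a * l * (q - M1)"
  shows "b * m * ((p - 2 * b * w / C) - M0) - a * l * ((q + 2 * a * w / C) - M1) = - w"
proof -
  have "b * m * ((p - 2 * b * w / C) - M0) - a * l * ((q + 2 * a * w / C) - M1)
      = w - 2 * w * (a^2 * l + b^2 * m) / C"
    using C by (simp add: w field_simps power2_eq_square)
  also have "\<dots> = - w" using C by (simp add: Cd[symmetric])
  finally show ?thesis .
qed

lemma sc_fac:
  fixes a b l m p q w C M0 M1 :: real
  assumes a: "a \<noteq> 0" and C: "C \<noteq> 0" and Cd: "C = a^2 * l + b^2 * m"
    and w: "w = b * m * (p - M0) - a * l * (q - M1)"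
  shows "q - (b * m * ((b * q + a * p) - a * M0) + a^2 * l * M1) / C = - a * w / C"
    and "p - 2 * b * w / C = (- b / a) * (2 * ((b * m * ((b * q + a * p) - a * M0) + a^2 * l * M1) / C) - q) + (1 / a) * (b * q + a * p)"
    and "q + 2 * a * w / C = 2 * ((b * m * ((b * q + a * p) - a * M0) + a^2 * l * M1) / C) - q"
proof -
  have num: "q * C - (b * m * ((b * q + a * p) - a * M0) + a^2 * l * M1) = - a * w"
    by (simp add: Cd w algebra_simps power2_eq_square)
  have "q - (b * m * ((b * q + a * p) - a * M0) + a^2 * l * M1) / C
      = (q * C - (b * m * ((b * q + a * p) - a * M0) + a^2 * l * M1)) / C"
    using C by (simp add: field_simps)
  thus k: "q - (b * m * ((b * q + a * p) - a * M0) + a^2 * l * M1) / C = - a * w / C"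
    unfolding num by simp
  show "p - 2 * b * w / C = (- b / a) * (2 * ((b * m * ((b * q + a * p) - a * M0) + a^2 * l * M1) / C) - q) + (1 / a) * (b * q + a * p)"
  proof -
    have "(- b / a) * (2 * ((b * m * ((b * q + a * p) - a * M0) + a^2 * l * M1) / C) - q) + (1 / a) * (b * q + a * p)
       = p + (2 * b / a) * (q - (b * m * ((b * q + a * p) - a * M0) + a^2 * l * M1) / C)"
      using a by (simp add: field_simps)
    also have "\<dots> = p - 2 * b * w / C" unfolding k using a C by (simp add: field_simps)
    finally show ?thesis by simp
  qed
  show "q + 2 * a * w / C = 2 * ((b * m * ((b * q + a * p) - a * M0) + a^2 * l * M1) / C) - q"
  proof -
    have "2 * ((b * m * ((b * q + a * p) - a * M0) + a^2 * l * M1) / C) - q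
       = q - 2 * (q - (b * m * ((b * q + a * p) - a * M0) + a^2 * l * M1) / C)" by simp
    also have "\<dots> = q + 2 * a * w / C" unfolding k by simp
    finally show ?thesis by simp
  qed
qed


locale refl_setup =
  fixes U :: "(real^'n) set" and lam mu :: "real^'n \<Rightarrow> real" and m0 m1 :: "real^'n" and a b :: real
  assumes U: "onb U" and lam: "\<And>u. u \<in> U \<Longrightarrow> lam u > 0" and mu: "\<And>u. u \<in> U \<Longrightarrow> mu u > 0"
    and ab: "a \<noteq> 0 \<or> b \<noteq> 0"
begin

definition "cc u = a^2 * lam u + b^2 * mu u"
definition "ww u z = b * mu u * (u \<bullet> (fst z - m0)) - a * lam u * (u \<bullet> (snd z - m1))"
definition "R z = (fst z - (\<Sum>u\<in>U. (2 * b * ww u z / cc u) *\<^sub>R u), snd z + (\<Sum>u\<in>U. (2 * a * ww u z / cc u) *\<^sub>R u))"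
definition "Qf z = (\<Sum>u\<in>U. (u \<bullet> (fst z - m0))^2 / lam u + (u \<bullet> (snd z - m1))^2 / mu u)"

lemma cc_pos: "u \<in> U \<Longrightarrow> cc u > 0"
proof -
  assume u: "u \<in> U"
  have "a^2 > 0 \<or> b^2 > 0" using ab by auto
  moreover have "a^2 * lam u \<ge> 0" "b^2 * mu u \<ge> 0" using lam[OF u] mu[OF u] by auto
  ultimately show ?thesis unfolding cc_def using lam[OF u] mu[OF u]
    by (auto simp: add_pos_nonneg add_nonneg_pos)
qed

lemma R_fst: "u \<in> U \<Longrightarrow> u \<bullet> fst (R z) = u \<bullet> fst z - 2 * b * ww u z / cc u"
  by (simp add: R_def inner_diff_right onb_inner_sum[OF U])

lemma R_snd: "u \<in> U \<Longrightarrow> u \<bullet> snd (R z) = u \<bullet> snd z + 2 * a * ww u z / cc u"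
  by (simp add: R_def inner_add_right onb_inner_sum[OF U])

lemma ww_R: "u \<in> U \<Longrightarrow> ww u (R z) = - ww u z"
proof -
  assume u: "u \<in> U"
  have c: "cc u \<noteq> 0" using cc_pos[OF u] by simp
  have cdef: "cc u = a^2 * lam u + b^2 * mu u" by (simp add: cc_def)
  have "ww u (R z) = b * mu u * ((u \<bullet> fst z - 2 * b * ww u z / cc u) - u \<bullet> m0)
      - a * lam u * ((u \<bullet> snd z + 2 * a * ww u z / cc u) - u \<bullet> m1)"
    unfolding ww_def[of u "R z"] inner_diff_right R_fst[OF u] R_snd[OF u] by (rule refl)
  also have "\<dots> = - ww u z"
    by (rule sc_w[OF c cdef]) (simp add: ww_def inner_diff_right)
  finally show ?thesis .
qed

lemma Qf_R: "Qf (R z) = Qf z"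
  unfolding Qf_def
proof (intro sum.cong refl)
  fix u assume u: "u \<in> U"
  have c: "cc u \<noteq> 0" and l: "lam u \<noteq> 0" and m: "mu u \<noteq> 0" using cc_pos[OF u] lam[OF u] mu[OF u] by auto
  define p where "p = u \<bullet> (fst z - m0)"
  define q where "q = u \<bullet> (snd z - m1)"
  have w: "ww u z = b * mu u * p - a * lam u * q" by (simp add: ww_def p_def q_def)
  have p': "u \<bullet> (fst (R z) - m0) = p - 2 * b * ww u z / cc u"
    by (simp add: inner_diff_right R_fst[OF u] p_def)
  have q': "u \<bullet> (snd (R z) - m1) = q + 2 * a * ww u z / cc u"
    by (simp add: inner_diff_right R_snd[OF u] q_def)
  have cdef: "cc u = a^2 * lam u + b^2 * mu u" by (simp add: cc_def)
  show "(u \<bullet> (fst (R z) - m0))^2 / lam u + (u \<bullet> (snd (R z) - m1))^2 / mu u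
      = (u \<bullet> (fst z - m0))^2 / lam u + (u \<bullet> (snd z - m1))^2 / mu u"
    unfolding p' q' p_def[symmetric] q_def[symmetric] by (rule sc_Q[OF c l m cdef w])
qed

lemma lin_R: "a *\<^sub>R fst (R z) + b *\<^sub>R snd (R z) = a *\<^sub>R fst z + b *\<^sub>R snd z"
proof -
  have "a *\<^sub>R (\<Sum>u\<in>U. (2 * b * ww u z / cc u) *\<^sub>R u) = b *\<^sub>R (\<Sum>u\<in>U. (2 * a * ww u z / cc u) *\<^sub>R u)"
    by (simp add: scaleR_sum_right algebra_simps)
  thus ?thesis by (simp add: R_def algebra_simps)
qed

lemma R_meas[measurable]: "R \<in> (lborel \<Otimes>\<^sub>M lborel) \<rightarrow>\<^sub>M (lborel \<Otimes>\<^sub>M lborel)"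
  unfolding R_def ww_def by measurable

definition "ccv y = (\<Sum>u\<in>U. ((b * mu u * (u \<bullet> y - a * (u \<bullet> m0)) + a^2 * lam u * (u \<bullet> m1)) / cc u) *\<^sub>R u)"

lemma ccv_meas[measurable]: "ccv \<in> borel_measurable borel"
  unfolding ccv_def by measurable

lemma R_factor:
  assumes a: "a \<noteq> 0"
  shows "R z = (let w = (b *\<^sub>R snd z + a *\<^sub>R fst z, snd z);
                    w' = (fst w, 2 *\<^sub>R ccv (fst w) + (-1) *\<^sub>R snd w)
                in ((- b / a) *\<^sub>R snd w' + (1 / a) *\<^sub>R fst w', snd w'))"
proof -
  have fstR: "u \<bullet> fst (R z) = u \<bullet> ((- b / a) *\<^sub>R (2 *\<^sub>R ccv (b *\<^sub>R snd z + a *\<^sub>R fst z) + (-1) *\<^sub>R snd z)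
        + (1 / a) *\<^sub>R (b *\<^sub>R snd z + a *\<^sub>R fst z))"
    and sndR: "u \<bullet> snd (R z) = u \<bullet> (2 *\<^sub>R ccv (b *\<^sub>R snd z + a *\<^sub>R fst z) + (-1) *\<^sub>R snd z)" if u: "u \<in> U" for u
  proof -
    have c: "cc u \<noteq> 0" using cc_pos[OF u] by simp
    have cv: "u \<bullet> ccv y = (b * mu u * (u \<bullet> y - a * (u \<bullet> m0)) + a^2 * lam u * (u \<bullet> m1)) / cc u" for y
      unfolding ccv_def by (rule onb_inner_sum[OF U u])
    have cdef: "cc u = a^2 * lam u + b^2 * mu u" by (simp add: cc_def)
    have w: "ww u z = b * mu u * (u \<bullet> fst z - u \<bullet> m0) - a * lam u * (u \<bullet> snd z - u \<bullet> m1)"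
      by (simp add: ww_def inner_diff_right)
    note F = sc_fac[OF a c cdef w]
    show "u \<bullet> fst (R z) = u \<bullet> ((- b / a) *\<^sub>R (2 *\<^sub>R ccv (b *\<^sub>R snd z + a *\<^sub>R fst z) + (-1) *\<^sub>R snd z)
        + (1 / a) *\<^sub>R (b *\<^sub>R snd z + a *\<^sub>R fst z))"
      unfolding R_fst[OF u] inner_add_right inner_scaleR_right cv F(2) by simp
    show "u \<bullet> snd (R z) = u \<bullet> (2 *\<^sub>R ccv (b *\<^sub>R snd z + a *\<^sub>R fst z) + (-1) *\<^sub>R snd z)"
      unfolding R_snd[OF u] inner_add_right inner_scaleR_right cv F(3) by simp
  qed
  have f1: "fst (R z) = (- b / a) *\<^sub>R (2 *\<^sub>R ccv (b *\<^sub>R snd z + a *\<^sub>R fst z) + (-1) *\<^sub>R snd z)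
        + (1 / a) *\<^sub>R (b *\<^sub>R snd z + a *\<^sub>R fst z)"
    by (rule onb_ext[OF U]) (rule fstR)
  have f2: "snd (R z) = 2 *\<^sub>R ccv (b *\<^sub>R snd z + a *\<^sub>R fst z) + (-1) *\<^sub>R snd z"
    by (rule onb_ext[OF U]) (rule sndR)
  show ?thesis unfolding Let_def fst_conv snd_conv using f1 f2 by (simp add: prod_eq_iff)
qed

lemma R_zero:
  assumes a: "a = 0"
  shows "R z = ((2 *\<^sub>R m0) + (-1) *\<^sub>R fst z, snd z)"
proof -
  have b: "b \<noteq> 0" using ab a by simp
  have "u \<bullet> fst (R z) = u \<bullet> ((2 *\<^sub>R m0) + (-1) *\<^sub>R fst z)" if u: "u \<in> U" for u
  proof -
    have m: "mu u \<noteq> 0" using mu[OF u] by simp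
    show ?thesis unfolding R_fst[OF u] ww_def cc_def using a b m
      by (simp add: field_simps inner_diff_right inner_add_right power2_eq_square)
  qed
  moreover have "snd (R z) = snd z" unfolding R_def ww_def using a by simp
  ultimately show ?thesis using onb_ext[OF U, of "fst (R z)" "(2 *\<^sub>R m0) + (-1) *\<^sub>R fst z"] by (simp add: prod_eq_iff)
qed

lemma R_pres:
  assumes g[measurable]: "g \<in> borel_measurable (lborel \<Otimes>\<^sub>M lborel)"
  shows "(\<integral>\<^sup>+z. g (R z) \<partial>(lborel \<Otimes>\<^sub>M lborel)) = (\<integral>\<^sup>+z. g z \<partial>(lborel \<Otimes>\<^sub>M lborel))"
proof (cases "a = 0")
  case True
  have "(\<integral>\<^sup>+z. g (R z) \<partial>(lborel \<Otimes>\<^sub>M lborel))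
      = (\<integral>\<^sup>+z. g ((\<lambda>_. 2 *\<^sub>R m0) (snd z) + (-1) *\<^sub>R fst z, snd z) \<partial>(lborel \<Otimes>\<^sub>M lborel))"
    by (simp add: R_zero[OF True])
  also have "\<dots> = ennreal (1 / \<bar>-1\<bar> ^ DIM(real^'n)) * (\<integral>\<^sup>+z. g z \<partial>(lborel \<Otimes>\<^sub>M lborel))"
    by (rule slice1) auto
  finally show ?thesis by simp
next
  case False
  define G2 where "G2 z = g ((- b / a) *\<^sub>R snd z + (1 / a) *\<^sub>R fst z, snd z)" for z
  define G1 where "G1 z = G2 (fst z, 2 *\<^sub>R ccv (fst z) + (-1) *\<^sub>R snd z)" for z
  have [measurable]: "G2 \<in> borel_measurable (lborel \<Otimes>\<^sub>M lborel)" unfolding G2_def by measurable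
  have [measurable]: "G1 \<in> borel_measurable (lborel \<Otimes>\<^sub>M lborel)" unfolding G1_def by measurable
  have "(\<integral>\<^sup>+z. g (R z) \<partial>(lborel \<Otimes>\<^sub>M lborel))
      = (\<integral>\<^sup>+z. G1 ((\<lambda>y. b *\<^sub>R y) (snd z) + a *\<^sub>R fst z, snd z) \<partial>(lborel \<Otimes>\<^sub>M lborel))"
    by (simp add: R_factor[OF False] G1_def G2_def Let_def)
  also have "\<dots> = ennreal (1 / \<bar>a\<bar> ^ DIM(real^'n)) * (\<integral>\<^sup>+z. G1 z \<partial>(lborel \<Otimes>\<^sub>M lborel))"
    by (rule slice1[OF False]) auto
  also have "(\<integral>\<^sup>+z. G1 z \<partial>(lborel \<Otimes>\<^sub>M lborel))
      = (\<integral>\<^sup>+z. G2 (fst z, (\<lambda>y. 2 *\<^sub>R ccv y) (fst z) + (-1) *\<^sub>R snd z) \<partial>(lborel \<Otimes>\<^sub>M lborel))"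
    by (simp add: G1_def)
  also have "\<dots> = ennreal (1 / \<bar>-1\<bar> ^ DIM(real^'n)) * (\<integral>\<^sup>+z. G2 z \<partial>(lborel \<Otimes>\<^sub>M lborel))"
    by (rule slice2) auto
  also have "(\<integral>\<^sup>+z. G2 z \<partial>(lborel \<Otimes>\<^sub>M lborel))
      = (\<integral>\<^sup>+z. g ((\<lambda>y. (- b / a) *\<^sub>R y) (snd z) + (1 / a) *\<^sub>R fst z, snd z) \<partial>(lborel \<Otimes>\<^sub>M lborel))"
    by (simp add: G2_def)
  also have "\<dots> = ennreal (1 / \<bar>1 / a\<bar> ^ DIM(real^'n)) * (\<integral>\<^sup>+z. g z \<partial>(lborel \<Otimes>\<^sub>M lborel))"
    by (rule slice1) (use False in \<open>simp_all\<close>)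
  finally have eq1: "(\<integral>\<^sup>+z. g (R z) \<partial>(lborel \<Otimes>\<^sub>M lborel))
     = ennreal (1 / \<bar>a\<bar> ^ DIM(real^'n)) * ennreal (1 / \<bar>1 / a\<bar> ^ DIM(real^'n)) * (\<integral>\<^sup>+z. g z \<partial>(lborel \<Otimes>\<^sub>M lborel))"
    by (simp add: mult.assoc)
  have eq2: "ennreal (1 / \<bar>a\<bar> ^ DIM(real^'n)) * ennreal (1 / \<bar>1 / a\<bar> ^ DIM(real^'n)) = 1"
  proof -
    define x where "x = \<bar>a\<bar> ^ DIM(real^'n)"
    have x: "x > 0" using False by (simp add: x_def)
    have "\<bar>1 / a\<bar> ^ DIM(real^'n) = 1 / x" by (simp add: x_def power_one_over)
    hence "ennreal (1 / \<bar>a\<bar> ^ DIM(real^'n)) * ennreal (1 / \<bar>1 / a\<bar> ^ DIM(real^'n))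
        = ennreal (1 / x) * ennreal x" by (simp add: x_def)
    also have "\<dots> = ennreal (1 / x * x)" using x ennreal_mult[of "1 / x" x] by simp
    also have "\<dots> = 1" using x by simp
    finally show ?thesis .
  qed
  show ?thesis using eq1 eq2 by (simp only: mult_1)
qed

end

lemma dens_Z_pos:
  fixes e :: "'a::euclidean_space \<Rightarrow> real"
  assumes P: "prob_space (density lborel (\<lambda>x. ennreal (e x / Z)))" and e: "\<And>x. e x > 0"
  shows "Z > 0"
proof (rule ccontr)
  assume "\<not> Z > 0"
  hence "e x / Z \<le> 0" for x using e[of x] by (cases "Z = 0") (auto simp: divide_pos_neg less_imp_le)
  hence "(\<lambda>x. ennreal (e x / Z)) = (\<lambda>_. 0)" by (auto simp: ennreal_eq_0_iff)
  hence "prob_space (density lborel (\<lambda>_::'a. 0))" using P by simp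
  hence "emeasure (density lborel (\<lambda>_::'a. 0)) (space (density lborel (\<lambda>_::'a. 0))) = 1"
    by (rule prob_space.emeasure_space_1)
  moreover have "emeasure (density lborel (\<lambda>_::'a. 0)) (space (density lborel (\<lambda>_::'a. 0))) = 0"
    by (subst emeasure_density) auto
  ultimately show False by simp
qed

definition gq :: "(real^'n) set \<Rightarrow> (real^'n \<Rightarrow> real) \<Rightarrow> real^'n \<Rightarrow> real" where
  "gq U lam z = (\<Sum>u\<in>U. 1 / lam u * (u \<bullet> z)^2)"

lemma gq_meas[measurable]: "gq U lam \<in> borel_measurable borel"
  unfolding gq_def by measurable

lemma gq_scale: "gq U lam (c *\<^sub>R z) = c^2 * gq U lam z"
  by (simp add: gq_def sum_distrib_left power_mult_distrib algebra_simps)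

lemma parseval: "onb U \<Longrightarrow> z \<bullet> z = (\<Sum>u\<in>U. (u \<bullet> z)^2)"
proof -
  assume U: "onb U"
  have "z \<bullet> z = z \<bullet> (\<Sum>u\<in>U. (u \<bullet> z) *\<^sub>R u)" using onb_expand[OF U, of z] by metis
  also have "\<dots> = (\<Sum>u\<in>U. (u \<bullet> z)^2)" by (simp add: inner_sum_right power2_eq_square inner_commute)
  finally show ?thesis .
qed

lemma gq_lower:
  assumes U: "onb U" and lam: "\<And>u. u \<in> U \<Longrightarrow> lam u > 0"
  shows "(norm z)^2 / (1 + (\<Sum>u\<in>U. lam u)) \<le> gq U lam z"
proof -
  define L where "L = 1 + (\<Sum>u\<in>U. lam u)"
  have fin: "finite U" using U onb_def by blast
  have lamL: "lam u \<le> L" if "u \<in> U" for u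
  proof -
    have "lam u \<le> (\<Sum>u\<in>U. lam u)" using fin that lam by (intro member_le_sum) (auto simp: less_imp_le)
    thus ?thesis by (simp add: L_def)
  qed
  have Lp: "L > 0" using lamL lam
    by (metis L_def add_pos_nonneg fin less_imp_le sum_nonneg zero_less_one)
  have "(norm z)^2 / L = (\<Sum>u\<in>U. 1 / L * (u \<bullet> z)^2)"
    by (simp add: power2_norm_eq_inner parseval[OF U] sum_distrib_left sum_divide_distrib)
  also have "\<dots> \<le> (\<Sum>u\<in>U. 1 / lam u * (u \<bullet> z)^2)"
  proof (intro sum_mono mult_right_mono)
    fix u assume u: "u \<in> U"
    show "1 / L \<le> 1 / lam u" using lam[OF u] lamL[OF u] by (simp add: frac_le)
  qed simp
  finally show ?thesis by (simp add: gq_def L_def)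
qed

lemma r_exp_bound:
  fixes r L :: real
  assumes L: "L > 0"
  shows "r \<le> 2 * sqrt L * exp (r^2 / (4 * L))"
proof -
  define y where "y = r / (2 * sqrt L)"
  have sL: "sqrt L > 0" using L by simp
  have "0 \<le> (y - 1/2)^2" by simp
  moreover have "1 + y^2 - y = (y - 1/2)^2 + 3/4" by (simp add: power2_eq_square algebra_simps)
  ultimately have "y \<le> 1 + y^2" by linarith
  also have "\<dots> \<le> exp (y^2)" by (rule exp_ge_add_one_self)
  also have "y^2 = r^2 / (4 * L)" using L by (simp add: y_def power_divide power_mult_distrib)
  finally have "y \<le> exp (r^2 / (4 * L))" .
  hence "2 * sqrt L * y \<le> 2 * sqrt L * exp (r^2 / (4 * L))" using sL by simp
  moreover have "2 * sqrt L * y = r" using sL by (simp add: y_def)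
  ultimately show ?thesis by simp
qed

lemma gauss_integrable:
  fixes U :: "(real^'n) set" and m :: "real^'n"
  assumes U: "onb U" and lam: "\<And>u. u \<in> U \<Longrightarrow> lam u > 0" and Zp: "Z > 0"
    and one: "(\<integral>\<^sup>+x. ennreal (exp (- (1/2) * gq U lam (x - m)) / Z) \<partial>lborel) = 1"
  shows "integrable lborel (\<lambda>x. (exp (- (1/2) * gq U lam (x - m)) / Z) *\<^sub>R x)"
proof -
  define phi where "phi x = exp (- (1/2) * gq U lam (x - m)) / Z" for x :: "real^'n"
  define h where "h x = exp (- (1/4) * gq U lam (x - m))" for x :: "real^'n"
  define L where "L = 1 + (\<Sum>u\<in>U. lam u)"
  have fin: "finite U" using U onb_def by blast
  have Lp: "L > 0" unfolding L_def using lam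
    by (metis add_pos_nonneg fin less_imp_le sum_nonneg zero_less_one)
  have [measurable]: "phi \<in> borel_measurable borel" "h \<in> borel_measurable borel"
    unfolding phi_def h_def by measurable
  have int_phi: "integrable lborel phi"
    by (rule integrableI_nonneg) (use one Zp in \<open>auto simp: phi_def\<close>)
  have I1: "(\<integral>\<^sup>+x. ennreal (exp (- (1/2) * gq U lam x)) \<partial>lborel) = ennreal Z"
  proof -
    have "(\<integral>\<^sup>+x. ennreal (exp (- (1/2) * gq U lam x)) \<partial>lborel)
        = (\<integral>\<^sup>+x. (\<lambda>y. ennreal (exp (- (1/2) * gq U lam (y - m)))) (m + 1 *\<^sub>R x) \<partial>lborel)" by simp
    also have "\<dots> = ennreal (1 / \<bar>1\<bar> ^ DIM(real^'n)) * (\<integral>\<^sup>+y. ennreal (exp (- (1/2) * gq U lam (y - m))) \<partial>lborel)"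
      by (rule nn_affine) auto
    also have "\<dots> = (\<integral>\<^sup>+y. ennreal Z * ennreal (phi y) \<partial>lborel)"
      using Zp by (auto simp: phi_def ennreal_mult[symmetric] intro!: nn_integral_cong)
    also have "\<dots> = ennreal Z * (\<integral>\<^sup>+y. ennreal (phi y) \<partial>lborel)"
      by (rule nn_integral_cmult) measurable
    also have "\<dots> = ennreal Z" using one by (simp add: phi_def)
    finally show ?thesis .
  qed
  have "(\<integral>\<^sup>+x. ennreal (h x) \<partial>lborel) < \<infinity>"
  proof -
    have "(\<integral>\<^sup>+x. ennreal (exp (- (1/2) * gq U lam x)) \<partial>lborel)
        = (\<integral>\<^sup>+x. (\<lambda>y. ennreal (h y)) (m + sqrt 2 *\<^sub>R x) \<partial>lborel)"
      by (intro nn_integral_cong) (simp add: h_def gq_scale)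
    also have "\<dots> = ennreal (1 / \<bar>sqrt 2\<bar> ^ DIM(real^'n)) * (\<integral>\<^sup>+y. ennreal (h y) \<partial>lborel)"
      by (rule nn_affine) auto
    finally have "ennreal (1 / \<bar>sqrt 2\<bar> ^ DIM(real^'n)) * (\<integral>\<^sup>+y. ennreal (h y) \<partial>lborel) < \<infinity>"
      using I1 by simp
    thus ?thesis by (auto simp: ennreal_mult_less_top)
  qed
  hence int_h: "integrable lborel h"
    by (intro integrableI_nonneg) (auto simp: h_def)
  define K where "K = 2 * sqrt L / Z"
  have int_f: "integrable lborel (\<lambda>x. phi x * norm m + K * h x)"
    using int_phi int_h by (intro Bochner_Integration.integrable_add integrable_mult_left integrable_mult_right)
  show ?thesis
    unfolding phi_def[symmetric]
  proof (rule Bochner_Integration.integrable_bound[OF int_f], measurable, rule AE_I2)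
    fix x :: "real^'n"
    define G where "G = gq U lam (x - m)"
    define r where "r = norm (x - m)"
    have G: "r^2 / L \<le> G" unfolding G_def r_def L_def by (rule gq_lower[OF U lam])
    have phin: "phi x \<ge> 0" using Zp by (simp add: phi_def)
    have "r \<le> 2 * sqrt L * exp (r^2 / (4 * L))" by (rule r_exp_bound[OF Lp])
    also have "\<dots> \<le> 2 * sqrt L * exp (G / 4)"
      using G Lp by (intro mult_left_mono) (auto simp: field_simps)
    finally have rb: "r \<le> 2 * sqrt L * exp (G / 4)" .
    have "phi x * r \<le> phi x * (2 * sqrt L * exp (G / 4))" using rb phin by (rule mult_left_mono)
    also have "\<dots> = K * (exp (- (1/2) * G) * exp (G / 4))" by (simp add: phi_def K_def G_def)
    also have "exp (- (1/2) * G) * exp (G / 4) = h x" by (simp add: h_def G_def exp_add[symmetric])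
    finally have b1: "phi x * r \<le> K * h x" .
    have "norm (phi x *\<^sub>R x) = phi x * norm x" using phin by simp
    also have "\<dots> \<le> phi x * (norm m + r)" unfolding r_def using phin
      by (intro mult_left_mono) (auto simp: norm_triangle_sub)
    also have "\<dots> \<le> phi x * norm m + K * h x" using b1 by (simp add: algebra_simps)
    also have "\<dots> \<le> norm (phi x * norm m + K * h x)" by simp
    finally show "norm (phi x *\<^sub>R x) \<le> norm (phi x * norm m + K * h x)" .
  qed
qed

lemma gaussian_mk:
  fixes U :: "(real^'n) set"
  assumes U: "onb U" and lam: "\<And>u. u \<in> U \<Longrightarrow> lam u > 0"
  shows "gaussian m (mk U lam) = density lborel (\<lambda>x. ennreal (exp (- (1/2) * gq U lam (x - m))
      / sqrt ((2 * pi) ^ CARD('n) * det (mk U lam))))"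
proof -
  have inv: "matrix_inv (mk U lam) = mk U (\<lambda>u. 1 / lam u)"
    using lam by (intro mk_inv[OF U]) (metis less_irrefl)
  show ?thesis unfolding gaussian_def inv mk_quad[OF U] gq_def by simp
qed

lemma prob_space_imp_sf: "prob_space M \<Longrightarrow> sigma_finite_measure M"
  by (simp add: prob_space_imp_sigma_finite)

context refl_setup
begin

lemma gauss_odd:
  fixes M :: "'w measure" and X0 X1 :: "'w \<Rightarrow> real^'n" and kappa :: "real^'n \<Rightarrow> real" and A :: "(real^'n) set"
  assumes P: "prob_space M" and X0[measurable]: "X0 \<in> borel_measurable M" and X1[measurable]: "X1 \<in> borel_measurable M"
    and d0: "distr M borel X0 = gaussian m0 (mk U lam)" and d1: "distr M borel X1 = gaussian m1 (mk U mu)"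
    and ind: "prob_space.indep_var M borel X0 borel X1" and A[measurable]: "A \<in> sets borel"
  shows "(\<integral>\<omega>. indicator A (a *\<^sub>R X0 \<omega> + b *\<^sub>R X1 \<omega>) *\<^sub>R (\<Sum>u\<in>U. (kappa u * ww u (X0 \<omega>, X1 \<omega>)) *\<^sub>R u) \<partial>M) = 0"
proof -
  define Z0 where "Z0 = sqrt ((2 * pi) ^ CARD('n) * det (mk U lam))"
  define Z1 where "Z1 = sqrt ((2 * pi) ^ CARD('n) * det (mk U mu))"
  define phi0 where "phi0 x = exp (- (1/2) * gq U lam (x - m0)) / Z0" for x
  define phi1 where "phi1 x = exp (- (1/2) * gq U mu (x - m1)) / Z1" for x
  have [measurable]: "phi0 \<in> borel_measurable borel" "phi1 \<in> borel_measurable borel"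
    unfolding phi0_def phi1_def by measurable
  have g0: "gaussian m0 (mk U lam) = density lborel (\<lambda>x. ennreal (phi0 x))"
    unfolding phi0_def Z0_def by (rule gaussian_mk[OF U lam])
  have g1: "gaussian m1 (mk U mu) = density lborel (\<lambda>x. ennreal (phi1 x))"
    unfolding phi1_def Z1_def by (rule gaussian_mk[OF U mu])
  have p0: "prob_space (density lborel (\<lambda>x. ennreal (phi0 x)))"
    using prob_space.prob_space_distr[OF P X0] d0 g0 by simp
  have p1: "prob_space (density lborel (\<lambda>x. ennreal (phi1 x)))"
    using prob_space.prob_space_distr[OF P X1] d1 g1 by simp
  have Z0p: "Z0 > 0" by (rule dens_Z_pos[OF p0[unfolded phi0_def]]) simp
  have Z1p: "Z1 > 0" by (rule dens_Z_pos[OF p1[unfolded phi1_def]]) simp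
  define rho where "rho z = ennreal (phi0 (fst z)) * ennreal (phi1 (snd z))" for z
  have [measurable]: "rho \<in> borel_measurable (lborel \<Otimes>\<^sub>M lborel)" unfolding rho_def by measurable
  define H where "H z = indicator A (a *\<^sub>R fst z + b *\<^sub>R snd z) *\<^sub>R (\<Sum>u\<in>U. (kappa u * ww u z) *\<^sub>R u)"
    for z :: "(real^'n) \<times> (real^'n)"
  have Hm[measurable]: "H \<in> borel_measurable (borel \<Otimes>\<^sub>M borel)"
    unfolding H_def ww_def by measurable
  have Hm2[measurable]: "H \<in> borel_measurable (lborel \<Otimes>\<^sub>M lborel)"
    unfolding H_def ww_def by measurable
  have joint: "distr M (borel \<Otimes>\<^sub>M borel) (\<lambda>\<omega>. (X0 \<omega>, X1 \<omega>)) = density (lborel \<Otimes>\<^sub>M lborel) rho"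
  proof -
    have "distr M (borel \<Otimes>\<^sub>M borel) (\<lambda>\<omega>. (X0 \<omega>, X1 \<omega>)) = distr M borel X0 \<Otimes>\<^sub>M distr M borel X1"
      using ind prob_space.indep_var_distribution_eq[OF P, of borel X0 borel X1] by simp
    also have "\<dots> = density lborel (\<lambda>x. ennreal (phi0 x)) \<Otimes>\<^sub>M density lborel (\<lambda>x. ennreal (phi1 x))"
      using d0 d1 g0 g1 by simp
    also have "\<dots> = density (lborel \<Otimes>\<^sub>M lborel) (\<lambda>(x, y). ennreal (phi0 x) * ennreal (phi1 y))"
      by (rule pair_measure_density) (auto intro: prob_space_imp_sf[OF p1] lborel.sigma_finite_measure_axioms)
    also have "(\<lambda>(x, y). ennreal (phi0 x) * ennreal (phi1 y)) = rho"
      by (auto simp: rho_def)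
    finally show ?thesis .
  qed
  have rhoR: "rho (R z) = rho z" for z
  proof -
    have Qs: "Qf w = gq U lam (fst w - m0) + gq U mu (snd w - m1)" for w
      by (simp add: Qf_def gq_def sum.distrib)
    have "rho w = ennreal (exp (- (1/2) * Qf w) / (Z0 * Z1))" for w
      using Z0p Z1p
      by (simp add: rho_def phi0_def phi1_def Qs ennreal_mult[symmetric] exp_add[symmetric] algebra_simps)
    thus ?thesis by (simp add: Qf_R)
  qed
  have HR: "H (R z) = - H z" for z
    by (simp add: H_def lin_R ww_R sum_negf cong: sum.cong)
  have pres: "distr (density (lborel \<Otimes>\<^sub>M lborel) rho) (lborel \<Otimes>\<^sub>M lborel) R = density (lborel \<Otimes>\<^sub>M lborel) rho"
    by (rule distr_density_preserve[OF R_meas]) (auto simp: R_pres rhoR)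
  have "(\<integral>\<omega>. indicator A (a *\<^sub>R X0 \<omega> + b *\<^sub>R X1 \<omega>) *\<^sub>R (\<Sum>u\<in>U. (kappa u * ww u (X0 \<omega>, X1 \<omega>)) *\<^sub>R u) \<partial>M)
      = (\<integral>\<omega>. H (X0 \<omega>, X1 \<omega>) \<partial>M)" by (simp add: H_def)
  also have "\<dots> = integral\<^sup>L (distr M (borel \<Otimes>\<^sub>M borel) (\<lambda>\<omega>. (X0 \<omega>, X1 \<omega>))) H"
    by (rule integral_distr[symmetric]) measurable
  also have "\<dots> = integral\<^sup>L (density (lborel \<Otimes>\<^sub>M lborel) rho) H" by (simp add: joint)
  also have "\<dots> = 0"
    by (rule integral_odd_zero[OF _ Hm2 pres]) (auto simp: HR)
  finally show ?thesis .
qed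

end

lemma gauss_X_integrable:
  fixes M :: "'w measure" and X :: "'w \<Rightarrow> real^'n" and U :: "(real^'n) set"
  assumes P: "prob_space M" and X[measurable]: "X \<in> borel_measurable M"
    and d: "distr M borel X = gaussian m (mk U lam)"
    and U: "onb U" and lam: "\<And>u. u \<in> U \<Longrightarrow> lam u > 0"
  shows "integrable M X"
proof -
  define Z where "Z = sqrt ((2 * pi) ^ CARD('n) * det (mk U lam))"
  define phi where "phi x = exp (- (1/2) * gq U lam (x - m)) / Z" for x
  have [measurable]: "phi \<in> borel_measurable borel" unfolding phi_def by measurable
  have g: "distr M borel X = density lborel (\<lambda>x. ennreal (phi x))"
    unfolding d phi_def Z_def by (rule gaussian_mk[OF U lam])
  have p: "prob_space (density lborel (\<lambda>x. ennreal (phi x)))"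
    using prob_space.prob_space_distr[OF P X] g by simp
  have Zp: "Z > 0" by (rule dens_Z_pos[OF p[unfolded phi_def]]) simp
  have one: "(\<integral>\<^sup>+x. ennreal (phi x) \<partial>lborel) = 1"
  proof -
    have "emeasure (density lborel (\<lambda>x. ennreal (phi x))) (space (density lborel (\<lambda>x. ennreal (phi x)))) = 1"
      by (rule prob_space.emeasure_space_1[OF p])
    thus ?thesis by (subst (asm) emeasure_density) auto
  qed
  have "integrable lborel (\<lambda>x. phi x *\<^sub>R x)"
    unfolding phi_def by (rule gauss_integrable[OF U lam Zp one[unfolded phi_def]])
  hence "integrable (density lborel (\<lambda>x. ennreal (phi x))) (\<lambda>x. x)"
    using Zp by (subst integrable_density) (auto simp: phi_def)
  hence "integrable (distr M borel X) (\<lambda>x. x)" using g by simp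
  thus ?thesis by (subst (asm) integrable_distr_eq) auto
qed

theorem proposition5:
  fixes M :: "'w measure"
    and X0 X1 :: "'w \<Rightarrow> real^'n"
    and m0 m1 :: "real^'n" and S0 S1 :: "real^'n^'n"
    and \<alpha> \<beta> \<alpha>' \<beta>' \<alpha>'' \<beta>'' :: "real \<Rightarrow> real"
    and m mdot :: "real \<Rightarrow> real^'n"
    and S Sdot :: "real \<Rightarrow> real^'n^'n"
    and v :: "real \<Rightarrow> real^'n \<Rightarrow> real^'n"
    and f :: "real \<Rightarrow> real^'n \<Rightarrow> real^'n"
  assumes "prob_space M"
    and "X0 \<in> borel_measurable M" and "X1 \<in> borel_measurable M"
    and "distr M borel X0 = gaussian m0 S0"
    and "distr M borel X1 = gaussian m1 S1"
    and "prob_space.indep_var M borel X0 borel X1"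
    and "pos_def_mat S0" and "pos_def_mat S1" and "S0 ** S1 = S1 ** S0"
    and "\<forall>t\<in>{0..1}. (\<alpha> has_real_derivative \<alpha>' t) (at t within {0..1})"
    and "\<forall>t\<in>{0..1}. (\<alpha>' has_real_derivative \<alpha>'' t) (at t within {0..1})"
    and "continuous_on {0..1} \<alpha>''"
    and "\<forall>t\<in>{0..1}. (\<beta> has_real_derivative \<beta>' t) (at t within {0..1})"
    and "\<forall>t\<in>{0..1}. (\<beta>' has_real_derivative \<beta>'' t) (at t within {0..1})"
    and "continuous_on {0..1} \<beta>''"
    and "\<alpha> 0 = 1" and "\<beta> 1 = 1" and "\<alpha> 1 = 0" and "\<beta> 0 = 0"
    and "\<forall>t\<in>{0<..<1}. \<alpha> t > 0 \<and> \<beta> t > 0"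
  defines "m \<equiv> \<lambda>t. \<alpha> t *\<^sub>R m0 + \<beta> t *\<^sub>R m1"
    and "mdot \<equiv> \<lambda>t. \<alpha>' t *\<^sub>R m0 + \<beta>' t *\<^sub>R m1"
    and "S \<equiv> \<lambda>t. (\<alpha> t)\<^sup>2 *\<^sub>R S0 + (\<beta> t)\<^sup>2 *\<^sub>R S1"
    and "Sdot \<equiv> \<lambda>t. (2 * \<alpha> t * \<alpha>' t) *\<^sub>R S0 + (2 * \<beta> t * \<beta>' t) *\<^sub>R S1"
    and "v \<equiv> \<lambda>t x. mdot t + (1/2) *\<^sub>R ((Sdot t ** matrix_inv (S t)) *v (x - m t))"
    and "f \<equiv> \<lambda>t x. m t + (mat_sqrt (S t) ** matrix_inv (mat_sqrt S0)) *v (x - m0)"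
  shows
    "(\<forall>t\<in>{0..1}. is_cond_exp_given M (\<lambda>\<omega>. \<alpha> t *\<^sub>R X0 \<omega> + \<beta> t *\<^sub>R X1 \<omega>)
                  (\<lambda>\<omega>. \<alpha>' t *\<^sub>R X0 \<omega> + \<beta>' t *\<^sub>R X1 \<omega>) (v t))
     \<and> (\<forall>x. f 0 x = x \<and>
          (\<forall>t\<in>{0..1}. ((\<lambda>s. f s x) has_vector_derivative v t (f t x)) (at t within {0..1})))
     \<and> (\<forall>x g. g 0 = x \<and>
          (\<forall>t\<in>{0..1}. (g has_vector_derivative v t (g t)) (at t within {0..1}))
          \<longrightarrow> (\<forall>t\<in>{0..1}. g t = f t x))"
proof -
  note P = assms(1) and X0m[measurable] = assms(2) and X1m[measurable] = assms(3)
  note d0 = assms(4) and d1 = assms(5) and ind = assms(6)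
  note pd0 = assms(7) and pd1 = assms(8) and comm = assms(9)
  note da = assms(10) and db = assms(13)
  note a0 = assms(16) and b1 = assms(17) and a1 = assms(18) and b0 = assms(19) and abpos = assms(20)
  note m_def = \<open>m \<equiv> \<lambda>t. \<alpha> t *\<^sub>R m0 + \<beta> t *\<^sub>R m1\<close>
  note mdot_def = \<open>mdot \<equiv> \<lambda>t. \<alpha>' t *\<^sub>R m0 + \<beta>' t *\<^sub>R m1\<close>
  note S_def = \<open>S \<equiv> \<lambda>t. (\<alpha> t)\<^sup>2 *\<^sub>R S0 + (\<beta> t)\<^sup>2 *\<^sub>R S1\<close>
  note Sdot_def = \<open>Sdot \<equiv> \<lambda>t. (2 * \<alpha> t * \<alpha>' t) *\<^sub>R S0 + (2 * \<beta> t * \<beta>' t) *\<^sub>R S1\<close>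
  note v_def = \<open>v \<equiv> \<lambda>t x. mdot t + (1/2) *\<^sub>R ((Sdot t ** matrix_inv (S t)) *v (x - m t))\<close>
  note f_def = \<open>f \<equiv> \<lambda>t x. m t + (mat_sqrt (S t) ** matrix_inv (mat_sqrt S0)) *v (x - m0)\<close>
  have sym0: "transpose S0 = S0" and sym1: "transpose S1 = S1"
    using pd0 pd1 unfolding pos_def_mat_def by auto
  obtain U where U: "onb U" and eig: "\<And>u. u \<in> U \<Longrightarrow> S0 *v u = (u \<bullet> (S0 *v u)) *\<^sub>R u \<and> S1 *v u = (u \<bullet> (S1 *v u)) *\<^sub>R u"
    using common_basis[OF sym0 sym1 comm] by blast
  define lam where "lam u = u \<bullet> (S0 *v u)" for u
  define mu where "mu u = u \<bullet> (S1 *v u)" for u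
  have unz: "u \<noteq> 0" if "u \<in> U" for u using U that unfolding onb_def by auto
  have lam: "lam u > 0" if "u \<in> U" for u using pd0 unz[OF that] unfolding pos_def_mat_def lam_def by blast
  have mu: "mu u > 0" if "u \<in> U" for u using pd1 unz[OF that] unfolding pos_def_mat_def mu_def by blast
  have S0eq: "S0 = mk U lam"
  proof (rule mk_eigen[OF U])
    fix u assume "u \<in> U" thus "S0 *v u = lam u *\<^sub>R u" unfolding lam_def using eig by blast
  qed
  have S1eq: "S1 = mk U mu"
  proof (rule mk_eigen[OF U])
    fix u assume "u \<in> U" thus "S1 *v u = mu u *\<^sub>R u" unfolding mu_def using eig by blast
  qed
  define ct where "ct t u = (\<alpha> t)^2 * lam u + (\<beta> t)^2 * mu u" for t u
  define cd where "cd t u = 2 * \<alpha> t * \<alpha>' t * lam u + 2 * \<beta> t * \<beta>' t * mu u" for t u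
  have ab_nz: "\<alpha> t \<noteq> 0 \<or> \<beta> t \<noteq> 0" if "t \<in> {0..1}" for t
  proof (cases "t = 0 \<or> t = 1")
    case True thus ?thesis using a0 b1 by auto
  next
    case False hence "t \<in> {0<..<1}" using that by auto
    hence "\<alpha> t > 0" using abpos by blast
    thus ?thesis by simp
  qed
  have ct_pos: "ct t u > 0" if "t \<in> {0..1}" "u \<in> U" for t u
  proof -
    have "(\<alpha> t)^2 > 0 \<or> (\<beta> t)^2 > 0" using ab_nz[OF that(1)] by auto
    moreover have "(\<alpha> t)^2 * lam u \<ge> 0" "(\<beta> t)^2 * mu u \<ge> 0" using lam[OF that(2)] mu[OF that(2)] by auto
    ultimately show ?thesis unfolding ct_def using lam[OF that(2)] mu[OF that(2)]
      by (auto simp: add_pos_nonneg add_nonneg_pos)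
  qed
  have St: "S t = mk U (ct t)" for t
    by (simp add: S_def S0eq S1eq mk_scale mk_add ct_def[abs_def])
  have Sdt: "Sdot t = mk U (cd t)" for t
    by (simp add: Sdot_def S0eq S1eq mk_scale mk_add cd_def[abs_def] mult.assoc)
  have v_form: "v t y = mdot t + mk U (\<lambda>u. cd t u / (2 * ct t u)) *v (y - m t)" if t: "t \<in> {0..1}" for t y
  proof -
    have inv: "matrix_inv (S t) = mk U (\<lambda>u. 1 / ct t u)"
      unfolding St using ct_pos[OF t] by (intro mk_inv[OF U]) (metis less_irrefl)
    have "(1/2::real) *\<^sub>R (Sdot t ** matrix_inv (S t)) = mk U (\<lambda>u. cd t u / (2 * ct t u))"
      unfolding inv Sdt mk_mult[OF U] mk_scale by (intro mk_cong) simp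
    thus ?thesis by (simp add: v_def scaleR_matrix_vector_assoc)
  qed
  have ct0: "ct 0 u = lam u" for u by (simp add: ct_def a0 b0)
  have m0eq: "m 0 = m0" by (simp add: m_def a0 b0)
  have f_form: "f t y = m t + mk U (\<lambda>u. sqrt (ct t u) / sqrt (ct 0 u)) *v (y - m 0)" if t: "t \<in> {0..1}" for t y
  proof -
    have sq: "mat_sqrt (S t) = mk U (\<lambda>u. sqrt (ct t u))"
      unfolding St by (rule mk_sqrt[OF U]) (rule ct_pos[OF t])
    have sq0: "mat_sqrt S0 = mk U (\<lambda>u. sqrt (lam u))"
      unfolding S0eq by (rule mk_sqrt[OF U]) (rule lam)
    have inv0: "matrix_inv (mat_sqrt S0) = mk U (\<lambda>u. 1 / sqrt (lam u))"
      unfolding sq0 using lam by (intro mk_inv[OF U]) (metis less_irrefl real_sqrt_gt_0_iff)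
    have "mat_sqrt (S t) ** matrix_inv (mat_sqrt S0) = mk U (\<lambda>u. sqrt (ct t u) / sqrt (ct 0 u))"
      unfolding sq inv0 mk_mult[OF U] ct0 by (intro mk_cong) simp
    thus ?thesis by (simp add: f_def m0eq)
  qed
  have cder: "((\<lambda>s. ct s u) has_real_derivative cd t u) (at t within {0..1})" if t: "t \<in> {0..1}" for t u
  proof -
    have "((\<lambda>s. (\<alpha> s)^2 * lam u + (\<beta> s)^2 * mu u) has_real_derivative
        (2 * \<alpha> t * \<alpha>' t * lam u + 2 * \<beta> t * \<beta>' t * mu u)) (at t within {0..1})"
      using da t db by (auto intro!: derivative_eq_intros)
    thus ?thesis by (simp add: ct_def cd_def)
  qed
  have mder: "(m has_vector_derivative mdot t) (at t within {0..1})" if t: "t \<in> {0..1}" for t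
  proof -
    have "((\<lambda>s. \<alpha> s *\<^sub>R m0 + \<beta> s *\<^sub>R m1) has_vector_derivative
        (\<alpha> t *\<^sub>R 0 + \<alpha>' t *\<^sub>R m0 + (\<beta> t *\<^sub>R 0 + \<beta>' t *\<^sub>R m1))) (at t within {0..1})"
      using da db t by (intro has_vector_derivative_add has_vector_derivative_scaleR has_vector_derivative_const) auto
    thus ?thesis by (simp add: m_def mdot_def)
  qed
  have ODE: "(\<forall>x. f 0 x = x \<and>
          (\<forall>t\<in>{0..1}. ((\<lambda>s. f s x) has_vector_derivative v t (f t x)) (at t within {0..1})))
     \<and> (\<forall>x g. g 0 = x \<and>
          (\<forall>t\<in>{0..1}. (g has_vector_derivative v t (g t)) (at t within {0..1}))
          \<longrightarrow> (\<forall>t\<in>{0..1}. g t = f t x))"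
    by (rule ode_part[OF U ct_pos cder mder v_form f_form])
  have iX0: "integrable M X0" by (rule gauss_X_integrable[OF P X0m d0[unfolded S0eq] U lam])
  have iX1: "integrable M X1" by (rule gauss_X_integrable[OF P X1m d1[unfolded S1eq] U mu])
  have CE: "is_cond_exp_given M (\<lambda>\<omega>. \<alpha> t *\<^sub>R X0 \<omega> + \<beta> t *\<^sub>R X1 \<omega>)
                  (\<lambda>\<omega>. \<alpha>' t *\<^sub>R X0 \<omega> + \<beta>' t *\<^sub>R X1 \<omega>) (v t)" if t: "t \<in> {0..1}" for t
  proof -
    interpret rs: refl_setup U lam mu m0 m1 "\<alpha> t" "\<beta> t"
      by unfold_locales (use U lam mu ab_nz[OF t] in auto)
    define K where "K = mk U (\<lambda>u. cd t u / (2 * ct t u))"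
    have vt: "v t = (\<lambda>y. mdot t + K *v (y - m t))" using v_form[OF t] by (auto simp: K_def)
    have vtm[measurable]: "v t \<in> borel_measurable borel"
      unfolding vt K_def mk_mv by measurable
    have iY: "integrable M (\<lambda>\<omega>. \<alpha>' t *\<^sub>R X0 \<omega> + \<beta>' t *\<^sub>R X1 \<omega>)"
      using iX0 iX1 by (intro Bochner_Integration.integrable_add integrable_scaleR_right) auto
    have iV: "integrable M (\<lambda>\<omega>. v t (\<alpha> t *\<^sub>R X0 \<omega> + \<beta> t *\<^sub>R X1 \<omega>))"
    proof -
      have "integrable M (\<lambda>\<omega>. \<alpha> t *\<^sub>R X0 \<omega> + \<beta> t *\<^sub>R X1 \<omega> - m t)"
        using iX0 iX1 prob_space.finite_measure[OF P]
        by (intro Bochner_Integration.integrable_diff Bochner_Integration.integrable_add integrable_scaleR_right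
            finite_measure.integrable_const) auto
      hence "integrable M (\<lambda>\<omega>. K *v (\<alpha> t *\<^sub>R X0 \<omega> + \<beta> t *\<^sub>R X1 \<omega> - m t))"
        by (rule integrable_bounded_linear[OF matrix_vector_mul_bounded_linear])
      hence "integrable M (\<lambda>\<omega>. mdot t + K *v (\<alpha> t *\<^sub>R X0 \<omega> + \<beta> t *\<^sub>R X1 \<omega> - m t))"
        using prob_space.finite_measure[OF P]
        by (intro Bochner_Integration.integrable_add finite_measure.integrable_const) auto
      thus ?thesis by (simp add: vt)
    qed
    define kappa where "kappa u = (\<alpha>' t * \<beta> t - \<alpha> t * \<beta>' t) / ct t u" for u
    have diff: "(\<alpha>' t *\<^sub>R x0 + \<beta>' t *\<^sub>R x1) - v t (\<alpha> t *\<^sub>R x0 + \<beta> t *\<^sub>R x1)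
        = (\<Sum>u\<in>U. (kappa u * rs.ww u (x0, x1)) *\<^sub>R u)" for x0 x1
    proof (rule onb_ext[OF U])
      fix u assume u: "u \<in> U"
      have c: "ct t u \<noteq> 0" using ct_pos[OF t u] by simp
      define P0 where "P0 = u \<bullet> x0 - u \<bullet> m0"
      define Q0 where "Q0 = u \<bullet> x1 - u \<bullet> m1"
      have lhs: "u \<bullet> ((\<alpha>' t *\<^sub>R x0 + \<beta>' t *\<^sub>R x1) - v t (\<alpha> t *\<^sub>R x0 + \<beta> t *\<^sub>R x1))
          = \<alpha>' t * P0 + \<beta>' t * Q0 - cd t u / (2 * ct t u) * (\<alpha> t * P0 + \<beta> t * Q0)"
        by (simp add: vt K_def mk_inner[OF U u] m_def mdot_def inner_diff_right inner_add_right P0_def Q0_def algebra_simps)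
      have rhs: "u \<bullet> (\<Sum>u\<in>U. (kappa u * rs.ww u (x0, x1)) *\<^sub>R u)
          = (\<alpha>' t * \<beta> t - \<alpha> t * \<beta>' t) / ct t u * (\<beta> t * mu u * P0 - \<alpha> t * lam u * Q0)"
        by (simp add: onb_inner_sum[OF U u] kappa_def rs.ww_def inner_diff_right P0_def Q0_def)
      have num: "(\<alpha>' t * P0 + \<beta>' t * Q0) * ct t u - (cd t u / 2) * (\<alpha> t * P0 + \<beta> t * Q0)
          = (\<alpha>' t * \<beta> t - \<alpha> t * \<beta>' t) * (\<beta> t * mu u * P0 - \<alpha> t * lam u * Q0)"
        by (simp add: ct_def cd_def algebra_simps power2_eq_square)
      show "u \<bullet> ((\<alpha>' t *\<^sub>R x0 + \<beta>' t *\<^sub>R x1) - v t (\<alpha> t *\<^sub>R x0 + \<beta> t *\<^sub>R x1))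
          = u \<bullet> (\<Sum>u\<in>U. (kappa u * rs.ww u (x0, x1)) *\<^sub>R u)"
      proof -
        have "\<alpha>' t * P0 + \<beta>' t * Q0 - cd t u / (2 * ct t u) * (\<alpha> t * P0 + \<beta> t * Q0)
            = ((\<alpha>' t * P0 + \<beta>' t * Q0) * ct t u - (cd t u / 2) * (\<alpha> t * P0 + \<beta> t * Q0)) / ct t u"
          using c by (simp add: field_simps)
        also have "\<dots> = (\<alpha>' t * \<beta> t - \<alpha> t * \<beta>' t) * (\<beta> t * mu u * P0 - \<alpha> t * lam u * Q0) / ct t u"
          by (simp only: num)
        finally show ?thesis unfolding lhs rhs by simp
      qed
    qed
    show ?thesis
      unfolding is_cond_exp_given_def
    proof (intro conjI ballI vtm iY iV)
      fix A :: "(real^'n) set" assume A[measurable]: "A \<in> sets borel"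
      define Xt where "Xt \<omega> = \<alpha> t *\<^sub>R X0 \<omega> + \<beta> t *\<^sub>R X1 \<omega>" for \<omega>
      have [measurable]: "Xt \<in> borel_measurable M" unfolding Xt_def by measurable
      have i1: "integrable M (\<lambda>\<omega>. indicator A (Xt \<omega>) *\<^sub>R (\<alpha>' t *\<^sub>R X0 \<omega> + \<beta>' t *\<^sub>R X1 \<omega>))"
        by (rule Bochner_Integration.integrable_bound[OF iY]) (measurable, auto simp: indicator_def)
      have i2: "integrable M (\<lambda>\<omega>. indicator A (Xt \<omega>) *\<^sub>R v t (Xt \<omega>))"
        by (rule Bochner_Integration.integrable_bound[OF iV[folded Xt_def]]) (measurable, auto simp: indicator_def)
      have "(\<integral>\<omega>. indicator A (Xt \<omega>) *\<^sub>R (\<alpha>' t *\<^sub>R X0 \<omega> + \<beta>' t *\<^sub>R X1 \<omega>) \<partial>M)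
          - (\<integral>\<omega>. indicator A (Xt \<omega>) *\<^sub>R v t (Xt \<omega>) \<partial>M)
          = (\<integral>\<omega>. indicator A (Xt \<omega>) *\<^sub>R (\<alpha>' t *\<^sub>R X0 \<omega> + \<beta>' t *\<^sub>R X1 \<omega>)
               - indicator A (Xt \<omega>) *\<^sub>R v t (Xt \<omega>) \<partial>M)"
        by (rule Bochner_Integration.integral_diff[OF i1 i2, symmetric])
      also have "\<dots> = (\<integral>\<omega>. indicator A (\<alpha> t *\<^sub>R X0 \<omega> + \<beta> t *\<^sub>R X1 \<omega>) *\<^sub>R
            (\<Sum>u\<in>U. (kappa u * rs.ww u (X0 \<omega>, X1 \<omega>)) *\<^sub>R u) \<partial>M)"
        by (intro Bochner_Integration.integral_cong refl) (simp add: Xt_def diff[symmetric] scaleR_diff_right)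
      also have "\<dots> = 0"
        by (rule rs.gauss_odd[OF P X0m X1m d0[unfolded S0eq] d1[unfolded S1eq] ind A])
      finally show "(\<integral>\<omega>. indicator A (\<alpha> t *\<^sub>R X0 \<omega> + \<beta> t *\<^sub>R X1 \<omega>) *\<^sub>R (\<alpha>' t *\<^sub>R X0 \<omega> + \<beta>' t *\<^sub>R X1 \<omega>) \<partial>M)
          = (\<integral>\<omega>. indicator A (\<alpha> t *\<^sub>R X0 \<omega> + \<beta> t *\<^sub>R X1 \<omega>) *\<^sub>R v t (\<alpha> t *\<^sub>R X0 \<omega> + \<beta> t *\<^sub>R X1 \<omega>) \<partial>M)"
        unfolding Xt_def by simp
    qed
  qed
  show ?thesis using CE ODE by blast
qed


end
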